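(* Fix $\eta>0$ small, $\mathcal{I}=[\pi/4-\eta,\pi/4+\eta]$ and $\epsilon_0>0$ small. There exists $T>0$ such that $K^\parallel_{r,\epsilon}(\rho_\mu(t))<0$ and $K_\mu(t)<0$ for all $(t,s,r,\epsilon)\in[T,\infty)\times[0,\infty)\times\mathcal{I}\times[0,\epsilon_0]$, where $\mu=(s,r,\epsilon)$.
   Context: Fix $\varphi\in C^\infty(\mathbb{R})$ with $0\le\varphi\le1$, $\varphi(x)=0$ for $x\le0$, $\varphi(x)=1$ for $x\ge1$, and let $H$ be the Heaviside function ($H(x)=1$ for $x>0$, $H(x)=0$ for $x\le0$). For $r>0$, $\epsilon\ge0$ with $r+\epsilon<\pi/2$ and $\rho\ge0$ set $K^\parallel_{r,\epsilon}(\rho)=1-2\varphi((\rho-r)/\epsilon)$ if $\epsilon>0$ and $K^\parallel_{r,0}(\rho)=1-2H(\rho-r)$. Let $\mathcal{A}_{r,\epsilon}$ solve $\mathcal{A}''+K^\parallel_{r,\epsilon}\mathcal{A}=0$, $\mathcal{A}(0)=0$, $\mathcal{A}'(0)=1$ (for $\epsilon=0$: the unique $C^1$ function with these initial values solving the equation on $\rho\ne r$). For $\mu=(s,r,\epsilon)$, $\rho_\mu(t)$ is, for $s>0$, the solution of $\rho''=\frac{\mathcal{A}_{r,\epsilon}'(\rho)}{\mathcal{A}_{r,\epsilon}(\rho)}(1-(\rho')^2)$, $\rho(0)=s$, $\rho'(0)=0$, and $\rho_{0,r,\epsilon}(t)=t$. $K^\perp_{r,\epsilon}=\mathcal{A}_{r,\epsilon}^{-2}(1-(\mathcal{A}_{r,\epsilon}')^2)$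 and $K_\mu(t)=\rho_\mu'(t)^2K^\parallel_{r,\epsilon}(\rho_\mu(t))+(1-\rho_\mu'(t)^2)K^\perp_{r,\epsilon}(\rho_\mu(t))$. *)

theory Defs
  imports "HOL-Analysis.Analysis"
begin

definition smooth_fun :: "(real \<Rightarrow> real) \<Rightarrow> bool" where
  "smooth_fun f \<longleftrightarrow> (\<forall>n x. ((deriv ^^ n) f) differentiable (at x))"

definition cutoff :: "(real \<Rightarrow> real) \<Rightarrow> bool" where
  "cutoff \<phi> \<longleftrightarrow> smooth_fun \<phi> \<and> (\<forall>x. 0 \<le> \<phi> x \<and> \<phi> x \<le> 1)
     \<and> (\<forall>x\<le>0. \<phi> x = 0) \<and> (\<forall>x\<ge>1. \<phi> x = 1)"

definition heaviside :: "real \<Rightarrow> real" where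
  "heaviside x = (if x > 0 then 1 else 0)"

definition Kpar :: "(real \<Rightarrow> real) \<Rightarrow> real \<Rightarrow> real \<Rightarrow> real \<Rightarrow> real" where
  "Kpar \<phi> r \<epsilon> \<rho> =
     (if \<epsilon> > 0 then 1 - 2 * \<phi> ((\<rho> - r) / \<epsilon>) else 1 - 2 * heaviside (\<rho> - r))"

text \<open>Characterisation of the warping function: C^1 solution of A'' + K A = 0 with A(0)=0, A'(0)=1;
  the second-order equation is required everywhere if eps > 0 and away from rho = r if eps = 0.
  (The defining formula for K is extended to all real rho.)\<close>
definition is_warp :: "(real \<Rightarrow> real) \<Rightarrow> real \<Rightarrow> real \<Rightarrow> (real \<Rightarrow> real) \<Rightarrow> bool" where
  "is_warp \<phi> r \<epsilon> A \<longleftrightarrow> (\<exists>A'. A 0 = 0 \<and> A' 0 = 1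
      \<and> (\<forall>x. (A has_real_derivative A' x) (at x))
      \<and> continuous_on UNIV A'
      \<and> (\<forall>x. (\<epsilon> = 0 \<longrightarrow> x \<noteq> r) \<longrightarrow>
             (A' has_real_derivative (- Kpar \<phi> r \<epsilon> x * A x)) (at x)))"

definition warpA :: "(real \<Rightarrow> real) \<Rightarrow> real \<Rightarrow> real \<Rightarrow> real \<Rightarrow> real" where
  "warpA \<phi> r \<epsilon> = (THE A. is_warp \<phi> r \<epsilon> A)"

definition warpA' :: "(real \<Rightarrow> real) \<Rightarrow> real \<Rightarrow> real \<Rightarrow> real \<Rightarrow> real" where
  "warpA' \<phi> r \<epsilon> = deriv (warpA \<phi> r \<epsilon>)"

text \<open>Geodesic radial profile for s > 0: solution (on all of R) of
  rho'' = (A'(rho)/A(rho)) (1 - rho'^2), rho(0)=s, rho'(0)=0.\<close>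
definition is_rho :: "(real \<Rightarrow> real) \<Rightarrow> real \<Rightarrow> real \<Rightarrow> real \<Rightarrow> (real \<Rightarrow> real) \<Rightarrow> bool" where
  "is_rho \<phi> s r \<epsilon> \<rho> \<longleftrightarrow> (\<exists>\<rho>'. \<rho> 0 = s \<and> \<rho>' 0 = 0
      \<and> (\<forall>t. (\<rho> has_real_derivative \<rho>' t) (at t))
      \<and> (\<forall>t. (\<rho>' has_real_derivative
              (warpA' \<phi> r \<epsilon> (\<rho> t) / warpA \<phi> r \<epsilon> (\<rho> t) * (1 - (\<rho>' t)\<^sup>2))) (at t)))"

definition rho :: "(real \<Rightarrow> real) \<Rightarrow> real \<Rightarrow> real \<Rightarrow> real \<Rightarrow> real \<Rightarrow> real" where
  "rho \<phi> s r \<epsilon> = (if s = 0 then (\<lambda>t. t) else (THE \<rho>. is_rho \<phi> s r \<epsilon> \<rho>))"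

definition Kperp :: "(real \<Rightarrow> real) \<Rightarrow> real \<Rightarrow> real \<Rightarrow> real \<Rightarrow> real" where
  "Kperp \<phi> r \<epsilon> x = (1 - (warpA' \<phi> r \<epsilon> x)\<^sup>2) / (warpA \<phi> r \<epsilon> x)\<^sup>2"

definition Kmu :: "(real \<Rightarrow> real) \<Rightarrow> real \<Rightarrow> real \<Rightarrow> real \<Rightarrow> real \<Rightarrow> real" where
  "Kmu \<phi> s r \<epsilon> t =
     (let d = deriv (rho \<phi> s r \<epsilon>) t; x = rho \<phi> s r \<epsilon> t in
      d\<^sup>2 * Kpar \<phi> r \<epsilon> x + (1 - d\<^sup>2) * Kperp \<phi> r \<epsilon> x)"

end

theory Submission
  imports Defs
begin

definition prim :: "(real \<Rightarrow> real) \<Rightarrow> real \<Rightarrow> real" where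
  "prim f t = integral {-(\<bar>t\<bar>+1)..t} f - integral {-(\<bar>t\<bar>+1)..0} f"

lemma prim_indep:
  assumes f: "continuous_on UNIV f" and a: "a \<le> min t 0"
  shows "prim f t = integral {a..t} f - integral {a..0} f"
proof -
  have gen: "integral {a..t} f - integral {a..0} f = integral {a'..t} f - integral {a'..0} f"
    if "a' \<le> a" "a \<le> min t 0" for a a'
  proof -
    have i: "f integrable_on {x..y}" for x y
      using f by (intro integrable_continuous_real) (auto intro: continuous_on_subset)
    have "integral {a'..t} f = integral {a'..a} f + integral {a..t} f"
      using that using Henstock_Kurzweil_Integration.integral_combine[OF _ _ i] by auto
    moreover have "integral {a'..0} f = integral {a'..a} f + integral {a..0} f"
      using that using Henstock_Kurzweil_Integration.integral_combine[OF _ _ i] by auto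
    ultimately show ?thesis by simp
  qed
  let ?b = "-(\<bar>t\<bar>+1)"
  have "prim f t = integral {min a ?b..t} f - integral {min a ?b..0} f"
    unfolding prim_def by (rule gen) auto
  also have "\<dots> = integral {a..t} f - integral {a..0} f"
    using a by (intro gen[symmetric]) auto
  finally show ?thesis .
qed

lemma prim_0: "prim f 0 = 0" by (simp add: prim_def)

lemma prim_deriv:
  assumes f: "continuous_on UNIV f"
  shows "(prim f has_real_derivative f x) (at x)"
proof -
  define a where "a = -(\<bar>x\<bar>+2)"
  define b where "b = \<bar>x\<bar>+2"
  have "((\<lambda>u. integral {a..u} f - integral {a..0} f) has_real_derivative f x) (at x within {a..b})"
    using f by (intro DERIV_diff[where E=0, simplified] integral_has_real_derivative DERIV_const)
      (auto simp: a_def b_def intro: continuous_on_subset)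
  then have d0: "((\<lambda>u. integral {a..u} f - integral {a..0} f) has_real_derivative f x) (at x within {a<..<b})"
    by (rule DERIV_subset) auto
  have "at x within {a<..<b} = at x"
    by (rule at_within_open) (auto simp: a_def b_def)
  with d0 have d: "((\<lambda>u. integral {a..u} f - integral {a..0} f) has_real_derivative f x) (at x)"
    by simp
  show ?thesis
  proof (rule has_field_derivative_transform_within_open[OF d, where S="{a+1<..<b-1}"])
    fix u assume "u \<in> {a+1<..<b-1}"
    then show "integral {a..u} f - integral {a..0} f = prim f u"
      using prim_indep[OF f, of a u] by (auto simp: a_def b_def)
  qed (auto simp: a_def b_def)
qed

lemma comp_bound_pos:
  fixes f f' :: "real \<Rightarrow> real"
  assumes f0: "f 0 = 0" and d: "\<And>u. 0 \<le> u \<Longrightarrow> u \<le> t \<Longrightarrow> (f has_real_derivative f' u) (at u)"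
    and b: "\<And>u. 0 \<le> u \<Longrightarrow> u \<le> t \<Longrightarrow> \<bar>f' u\<bar> \<le> C * u^n / fact n" and t: "0 \<le> t"
  shows "\<bar>f t\<bar> \<le> C * t^(Suc n) / fact (Suc n)"
proof -
  define h where "h u = C * u^(Suc n) / fact (Suc n)" for u :: real
  have dh: "(h has_real_derivative C * u^n / fact n) (at u)" for u
  proof -
    have "(h has_real_derivative C * (real (Suc n) * u^n) / fact (Suc n)) (at u)"
      unfolding h_def by (intro derivative_eq_intros) auto
    moreover have "C * (real (Suc n) * u^n) / fact (Suc n) = C * u^n / fact n"
      by (simp add: fact_Suc field_simps del: of_nat_Suc)
    ultimately show ?thesis by simp
  qed
  have cf: "continuous_on {0..t} f"
    using d by (intro continuous_at_imp_continuous_on ballI DERIV_isCont) auto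
  have ch: "continuous_on {0..t} h"
    using dh by (intro continuous_at_imp_continuous_on ballI DERIV_isCont) auto
  have "(\<lambda>u. h u - f u) 0 \<le> (\<lambda>u. h u - f u) t"
  proof (rule DERIV_nonneg_imp_increasing_open[OF t])
    fix x assume x: "0 < x" "x < t"
    show "\<exists>y. ((\<lambda>u. h u - f u) has_real_derivative y) (at x) \<and> 0 \<le> y"
      using DERIV_diff[OF dh[of x] d[of x]] b[of x] x by (intro exI[of _ "C * x^n / fact n - f' x"]) auto
  qed (use cf ch in \<open>auto intro: continuous_on_diff\<close>)
  moreover have "(\<lambda>u. h u + f u) 0 \<le> (\<lambda>u. h u + f u) t"
  proof (rule DERIV_nonneg_imp_increasing_open[OF t])
    fix x assume x: "0 < x" "x < t"
    show "\<exists>y. ((\<lambda>u. h u + f u) has_real_derivative y) (at x) \<and> 0 \<le> y"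
      using DERIV_add[OF dh[of x] d[of x]] b[of x] x by (intro exI[of _ "C * x^n / fact n + f' x"]) auto
  qed (use cf ch in \<open>auto intro: continuous_on_add\<close>)
  moreover have "h 0 = 0" by (simp add: h_def)
  ultimately show ?thesis using f0 by (auto simp: h_def)
qed

lemma comp_bound:
  fixes f f' :: "real \<Rightarrow> real"
  assumes f0: "f 0 = 0" and d: "\<And>u. \<bar>u\<bar> \<le> \<bar>t\<bar> \<Longrightarrow> (f has_real_derivative f' u) (at u)"
    and b: "\<And>u. \<bar>u\<bar> \<le> \<bar>t\<bar> \<Longrightarrow> \<bar>f' u\<bar> \<le> C * \<bar>u\<bar>^n / fact n"
  shows "\<bar>f t\<bar> \<le> C * \<bar>t\<bar>^(Suc n) / fact (Suc n)"
proof (cases "0 \<le> t")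
  case True
  have "\<bar>f t\<bar> \<le> C * t^(Suc n) / fact (Suc n)"
  proof (rule comp_bound_pos[where f=f and f'=f' and t=t])
    fix u assume u: "0 \<le> u" "u \<le> t"
    then show "(f has_real_derivative f' u) (at u)" using d[of u] True by auto
    show "\<bar>f' u\<bar> \<le> C * u ^ n / fact n" using b[of u] u True by auto
  qed (use f0 True in auto)
  then show ?thesis using True by simp
next
  case False
  have "\<bar>(\<lambda>u. f (- u)) (-t)\<bar> \<le> C * (-t)^(Suc n) / fact (Suc n)"
  proof (rule comp_bound_pos[where f'="\<lambda>u. - f' (-u)"])
    fix u assume u: "0 \<le> u" "u \<le> -t"
    have "DERIV f (- u) :> f' (-u)" using d[of "-u"] u False by auto
    then show "((\<lambda>u. f (- u)) has_real_derivative - f' (- u)) (at u)"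
      by (simp add: DERIV_mirror)
    show "\<bar>- f' (- u)\<bar> \<le> C * u ^ n / fact n" using b[of "-u"] u False by auto
  qed (use f0 False in auto)
  then show ?thesis using False by auto
qed

locale ode2 =
  fixes F1 F2 :: "real \<Rightarrow> real \<Rightarrow> real \<Rightarrow> real" and L :: real
  assumes cont1: "\<And>Y Z. continuous_on UNIV Y \<Longrightarrow> continuous_on UNIV Z \<Longrightarrow> continuous_on UNIV (\<lambda>t. F1 t (Y t) (Z t))"
    and cont2: "\<And>Y Z. continuous_on UNIV Y \<Longrightarrow> continuous_on UNIV Z \<Longrightarrow> continuous_on UNIV (\<lambda>t. F2 t (Y t) (Z t))"
    and lip1: "\<And>t y z y' z'. \<bar>F1 t y z - F1 t y' z'\<bar> \<le> L * (\<bar>y - y'\<bar> + \<bar>z - z'\<bar>)"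
    and lip2: "\<And>t y z y' z'. \<bar>F2 t y z - F2 t y' z'\<bar> \<le> L * (\<bar>y - y'\<bar> + \<bar>z - z'\<bar>)"
    and Lpos: "L > 0"
begin

primrec pic :: "real \<Rightarrow> real \<Rightarrow> nat \<Rightarrow> (real \<Rightarrow> real) \<times> (real \<Rightarrow> real)" where
  "pic y0 z0 0 = ((\<lambda>t. y0), (\<lambda>t. z0))"
| "pic y0 z0 (Suc n) = ((\<lambda>t. y0 + prim (\<lambda>u. F1 u (fst (pic y0 z0 n) u) (snd (pic y0 z0 n) u)) t),
                        (\<lambda>t. z0 + prim (\<lambda>u. F2 u (fst (pic y0 z0 n) u) (snd (pic y0 z0 n) u)) t))"

lemma pic_cont: "continuous_on UNIV (fst (pic y0 z0 n)) \<and> continuous_on UNIV (snd (pic y0 z0 n))"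
proof (induction n)
  case 0 then show ?case by auto
next
  case (Suc n)
  have c1: "continuous_on UNIV (\<lambda>u. F1 u (fst (pic y0 z0 n) u) (snd (pic y0 z0 n) u))"
    and c2: "continuous_on UNIV (\<lambda>u. F2 u (fst (pic y0 z0 n) u) (snd (pic y0 z0 n) u))"
    using Suc cont1 cont2 by auto
  have d1: "((\<lambda>t. y0 + prim (\<lambda>u. F1 u (fst (pic y0 z0 n) u) (snd (pic y0 z0 n) u)) t) has_real_derivative
     F1 x (fst (pic y0 z0 n) x) (snd (pic y0 z0 n) x)) (at x)" for x
    using DERIV_add[OF DERIV_const prim_deriv[OF c1]] by simp
  have d2: "((\<lambda>t. z0 + prim (\<lambda>u. F2 u (fst (pic y0 z0 n) u) (snd (pic y0 z0 n) u)) t) has_real_derivative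
     F2 x (fst (pic y0 z0 n) x) (snd (pic y0 z0 n) x)) (at x)" for x
    using DERIV_add[OF DERIV_const prim_deriv[OF c2]] by simp
  show ?case
    by (simp only: pic.simps fst_conv snd_conv) (intro conjI continuous_at_imp_continuous_on ballI DERIV_isCont[OF d1] DERIV_isCont[OF d2])
qed

lemma pic_deriv:
  "((fst (pic y0 z0 (Suc n))) has_real_derivative F1 t (fst (pic y0 z0 n) t) (snd (pic y0 z0 n) t)) (at t)"
  "((snd (pic y0 z0 (Suc n))) has_real_derivative F2 t (fst (pic y0 z0 n) t) (snd (pic y0 z0 n) t)) (at t)"
proof -
  have c1: "continuous_on UNIV (\<lambda>u. F1 u (fst (pic y0 z0 n) u) (snd (pic y0 z0 n) u))"
    and c2: "continuous_on UNIV (\<lambda>u. F2 u (fst (pic y0 z0 n) u) (snd (pic y0 z0 n) u))"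
    using pic_cont cont1 cont2 by auto
  show "((fst (pic y0 z0 (Suc n))) has_real_derivative F1 t (fst (pic y0 z0 n) t) (snd (pic y0 z0 n) t)) (at t)"
    using DERIV_add[OF DERIV_const prim_deriv[OF c1]] by simp
  show "((snd (pic y0 z0 (Suc n))) has_real_derivative F2 t (fst (pic y0 z0 n) t) (snd (pic y0 z0 n) t)) (at t)"
    using DERIV_add[OF DERIV_const prim_deriv[OF c2]] by simp
qed

lemma pic_0: "fst (pic y0 z0 n) 0 = y0" "snd (pic y0 z0 n) 0 = z0"
  by (cases n; simp add: prim_0)+

lemma pic_bound:
  assumes M: "\<And>u. \<bar>u\<bar> \<le> N \<Longrightarrow> \<bar>F1 u y0 z0\<bar> \<le> M \<and> \<bar>F2 u y0 z0\<bar> \<le> M"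
  shows "\<bar>t\<bar> \<le> N \<Longrightarrow> \<bar>fst (pic y0 z0 (Suc n)) t - fst (pic y0 z0 n) t\<bar> + \<bar>snd (pic y0 z0 (Suc n)) t - snd (pic y0 z0 n) t\<bar>
     \<le> 2 * M * (2*L)^n * \<bar>t\<bar>^(Suc n) / fact (Suc n)"
proof (induction n arbitrary: t)
  case 0
  have a: "\<bar>fst (pic y0 z0 1) t - y0\<bar> \<le> M * \<bar>t\<bar>^(Suc 0) / fact (Suc 0)"
    by (rule comp_bound[where f="\<lambda>t. fst (pic y0 z0 1) t - y0" and f'="\<lambda>u. F1 u y0 z0"])
      (use prim_deriv[OF cont1[OF continuous_on_const continuous_on_const]] M 0 in \<open>auto simp: prim_0\<close>)
  have b: "\<bar>snd (pic y0 z0 1) t - z0\<bar> \<le> M * \<bar>t\<bar>^(Suc 0) / fact (Suc 0)"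
    by (rule comp_bound[where f="\<lambda>t. snd (pic y0 z0 1) t - z0" and f'="\<lambda>u. F2 u y0 z0"])
      (use prim_deriv[OF cont2[OF continuous_on_const continuous_on_const]] M 0 in \<open>auto simp: prim_0\<close>)
  show ?case using a b by simp
next
  case (Suc n)
  define Y where "Y = (\<lambda>k. fst (pic y0 z0 k))"
  define Z where "Z = (\<lambda>k. snd (pic y0 z0 k))"
  define C where "C = L * (2 * M * (2*L)^n)"
  have IH: "\<bar>u\<bar> \<le> \<bar>t\<bar> \<Longrightarrow> \<bar>Y (Suc n) u - Y n u\<bar> + \<bar>Z (Suc n) u - Z n u\<bar> \<le> 2 * M * (2*L)^n * \<bar>u\<bar>^(Suc n) / fact (Suc n)" for u
    using Suc.IH[of u] Suc.prems unfolding Y_def Z_def by auto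
  have a: "\<bar>Y (Suc (Suc n)) t - Y (Suc n) t\<bar> \<le> C * \<bar>t\<bar>^(Suc (Suc n)) / fact (Suc (Suc n))"
  proof (rule comp_bound[where f="\<lambda>t. Y (Suc (Suc n)) t - Y (Suc n) t" and
        f'="\<lambda>u. F1 u (Y (Suc n) u) (Z (Suc n) u) - F1 u (Y n u) (Z n u)"])
    show "Y (Suc (Suc n)) 0 - Y (Suc n) 0 = 0"
      unfolding Y_def using pic_0(1)[of y0 z0 "Suc (Suc n)"] pic_0(1)[of y0 z0 "Suc n"] by (simp del: pic.simps)
    show "((\<lambda>t. Y (Suc (Suc n)) t - Y (Suc n) t) has_real_derivative F1 u (Y (Suc n) u) (Z (Suc n) u) - F1 u (Y n u) (Z n u)) (at u)" for u
      unfolding Y_def Z_def by (intro DERIV_diff pic_deriv)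
    fix u assume u: "\<bar>u\<bar> \<le> \<bar>t\<bar>"
    have "\<bar>F1 u (Y (Suc n) u) (Z (Suc n) u) - F1 u (Y n u) (Z n u)\<bar> \<le> L * (\<bar>Y (Suc n) u - Y n u\<bar> + \<bar>Z (Suc n) u - Z n u\<bar>)"
      by (rule lip1)
    also have "\<dots> \<le> L * (2 * M * (2*L)^n * \<bar>u\<bar>^(Suc n) / fact (Suc n))"
      using IH[OF u] Lpos by (intro mult_left_mono) auto
    finally show "\<bar>F1 u (Y (Suc n) u) (Z (Suc n) u) - F1 u (Y n u) (Z n u)\<bar> \<le> C * \<bar>u\<bar>^(Suc n) / fact (Suc n)"
      by (simp add: C_def)
  qed
  have b: "\<bar>Z (Suc (Suc n)) t - Z (Suc n) t\<bar> \<le> C * \<bar>t\<bar>^(Suc (Suc n)) / fact (Suc (Suc n))"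
  proof (rule comp_bound[where f="\<lambda>t. Z (Suc (Suc n)) t - Z (Suc n) t" and
        f'="\<lambda>u. F2 u (Y (Suc n) u) (Z (Suc n) u) - F2 u (Y n u) (Z n u)"])
    show "Z (Suc (Suc n)) 0 - Z (Suc n) 0 = 0"
      unfolding Z_def using pic_0(2)[of y0 z0 "Suc (Suc n)"] pic_0(2)[of y0 z0 "Suc n"] by (simp del: pic.simps)
    show "((\<lambda>t. Z (Suc (Suc n)) t - Z (Suc n) t) has_real_derivative F2 u (Y (Suc n) u) (Z (Suc n) u) - F2 u (Y n u) (Z n u)) (at u)" for u
      unfolding Y_def Z_def by (intro DERIV_diff pic_deriv)
    fix u assume u: "\<bar>u\<bar> \<le> \<bar>t\<bar>"
    have "\<bar>F2 u (Y (Suc n) u) (Z (Suc n) u) - F2 u (Y n u) (Z n u)\<bar> \<le> L * (\<bar>Y (Suc n) u - Y n u\<bar> + \<bar>Z (Suc n) u - Z n u\<bar>)"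
      by (rule lip2)
    also have "\<dots> \<le> L * (2 * M * (2*L)^n * \<bar>u\<bar>^(Suc n) / fact (Suc n))"
      using IH[OF u] Lpos by (intro mult_left_mono) auto
    finally show "\<bar>F2 u (Y (Suc n) u) (Z (Suc n) u) - F2 u (Y n u) (Z n u)\<bar> \<le> C * \<bar>u\<bar>^(Suc n) / fact (Suc n)"
      by (simp add: C_def)
  qed
  have "\<bar>Y (Suc (Suc n)) t - Y (Suc n) t\<bar> + \<bar>Z (Suc (Suc n)) t - Z (Suc n) t\<bar>
      \<le> C * \<bar>t\<bar>^(Suc (Suc n)) / fact (Suc (Suc n)) + C * \<bar>t\<bar>^(Suc (Suc n)) / fact (Suc (Suc n))"
    using a b by linarith
  also have "\<dots> = 2 * M * (2*L)^(Suc n) * \<bar>t\<bar>^(Suc (Suc n)) / fact (Suc (Suc n))"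
    by (simp add: C_def field_simps)
  finally show ?case unfolding Y_def Z_def .
qed

end

lemma deriv_limit:
  fixes Y Z W :: "nat \<Rightarrow> real \<Rightarrow> real" and F :: "real \<Rightarrow> real \<Rightarrow> real \<Rightarrow> real"
  assumes uY: "uniform_limit {a<..<b} Y y sequentially"
    and uZ: "uniform_limit {a<..<b} Z z sequentially"
    and uW: "uniform_limit {a<..<b} W w sequentially"
    and x: "x \<in> {a<..<b}"
    and lip: "\<And>t y z y' z'. \<bar>F t y z - F t y' z'\<bar> \<le> L * (\<bar>y - y'\<bar> + \<bar>z - z'\<bar>)"
    and L: "L > 0"
    and dW: "\<And>n t. (W (Suc n) has_real_derivative F t (Y n t) (Z n t)) (at t)"
  shows "(w has_real_derivative F x (y x) (z x)) (at x)"
proof -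
  let ?S = "{a<..<b}"
  have conv: "convex ?S" by (rule convex_real_interval)
  have derf: "\<And>n u. u \<in> ?S \<Longrightarrow> ((\<lambda>u. W (Suc n) u) has_derivative (*) (F u (Y n u) (Z n u))) (at u within ?S)"
    using dW unfolding has_field_derivative_def by (rule has_derivative_at_withinI)
  have nle: "\<forall>\<^sub>F n in sequentially. \<forall>u\<in>?S. \<forall>h. norm (F u (Y n u) (Z n u) * h - F u (y u) (z u) * h) \<le> e * norm h"
    if e: "e > 0" for e
  proof -
    have e2: "e / (2*L) > 0" using e L by auto
    have "\<forall>\<^sub>F n in sequentially. (\<forall>u\<in>?S. dist (Y n u) (y u) < e/(2*L)) \<and> (\<forall>u\<in>?S. dist (Z n u) (z u) < e/(2*L))"
      using uniform_limitD[OF uY e2] uniform_limitD[OF uZ e2] by (rule eventually_conj)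
    then show ?thesis
    proof (rule eventually_mono)
      fix n assume n: "(\<forall>u\<in>?S. dist (Y n u) (y u) < e/(2*L)) \<and> (\<forall>u\<in>?S. dist (Z n u) (z u) < e/(2*L))"
      show "\<forall>u\<in>?S. \<forall>h. norm (F u (Y n u) (Z n u) * h - F u (y u) (z u) * h) \<le> e * norm h"
      proof (intro ballI allI)
        fix u h assume u: "u \<in> ?S"
        have "\<bar>F u (Y n u) (Z n u) - F u (y u) (z u)\<bar> \<le> L * (\<bar>Y n u - y u\<bar> + \<bar>Z n u - z u\<bar>)" by (rule lip)
        also have "\<dots> \<le> L * (e/(2*L) + e/(2*L))"
          using n u L by (intro mult_left_mono add_mono) (auto simp: dist_real_def intro: less_imp_le)
        also have "\<dots> = e" using L by (simp add: field_simps)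
        finally have "\<bar>F u (Y n u) (Z n u) - F u (y u) (z u)\<bar> \<le> e" .
        then have "\<bar>F u (Y n u) (Z n u) - F u (y u) (z u)\<bar> * \<bar>h\<bar> \<le> e * \<bar>h\<bar>"
          by (rule mult_right_mono) simp
        then show "norm (F u (Y n u) (Z n u) * h - F u (y u) (z u) * h) \<le> e * norm h"
          by (simp add: left_diff_distrib[symmetric] abs_mult)
      qed
    qed
  qed
  have limx: "(\<lambda>n. W (Suc n) x) \<longlonglongrightarrow> w x"
    using tendsto_uniform_limitI[OF uW x] by (rule LIMSEQ_Suc)
  obtain g where g: "\<forall>u\<in>?S. (\<lambda>n. W (Suc n) u) \<longlonglongrightarrow> g u \<and> (g has_derivative (*) (F u (y u) (z u))) (at u within ?S)"
    using has_derivative_sequence[where f="\<lambda>n u. W (Suc n) u" and f'="\<lambda>n u. (*) (F u (Y n u) (Z n u))"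
        and g'="\<lambda>u. (*) (F u (y u) (z u))" and S="?S", OF conv derf nle x limx] by blast
  have gw: "g u = w u" if "u \<in> ?S" for u
    using LIMSEQ_unique[OF conjunct1[OF g[rule_format, OF that]] LIMSEQ_Suc[OF tendsto_uniform_limitI[OF uW that]]] .
  have ae: "at x within ?S = at x" by (rule at_within_open) (use x in auto)
  have "(g has_derivative (*) (F x (y x) (z x))) (at x within ?S)" using g x by blast
  then have "(g has_real_derivative F x (y x) (z x)) (at x)"
    unfolding ae has_field_derivative_def .
  then show ?thesis
    by (rule has_field_derivative_transform_within_open[where S="?S"]) (use x gw in auto)
qed

context ode2 begin

lemma exists_M: "\<exists>M. \<forall>u. \<bar>u\<bar> \<le> N \<longrightarrow> \<bar>F1 u y0 z0\<bar> \<le> M \<and> \<bar>F2 u y0 z0\<bar> \<le> M"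
proof -
  have c1: "continuous_on {-N..N} (\<lambda>u. F1 u y0 z0)"
    using cont1[of "\<lambda>t. y0" "\<lambda>t. z0"] by (auto intro: continuous_on_subset)
  have c2: "continuous_on {-N..N} (\<lambda>u. F2 u y0 z0)"
    using cont2[of "\<lambda>t. y0" "\<lambda>t. z0"] by (auto intro: continuous_on_subset)
  obtain M1 where M1: "\<forall>x\<in>(\<lambda>u. F1 u y0 z0) ` {-N..N}. \<bar>x\<bar> \<le> M1"
    using compact_imp_bounded[OF compact_continuous_image[OF c1 compact_Icc]] by (auto simp: bounded_real)
  obtain M2 where M2: "\<forall>x\<in>(\<lambda>u. F2 u y0 z0) ` {-N..N}. \<bar>x\<bar> \<le> M2"
    using compact_imp_bounded[OF compact_continuous_image[OF c2 compact_Icc]] by (auto simp: bounded_real)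
  show ?thesis
  proof (intro exI[of _ "max M1 M2"] allI impI)
    fix u assume "\<bar>u\<bar> \<le> N"
    then have u: "u \<in> {-N..N}" by auto
    have "\<bar>F1 u y0 z0\<bar> \<le> M1" using M1 u by blast
    moreover have "\<bar>F2 u y0 z0\<bar> \<le> M2" using M2 u by blast
    ultimately show "\<bar>F1 u y0 z0\<bar> \<le> max M1 M2 \<and> \<bar>F2 u y0 z0\<bar> \<le> max M1 M2" by auto
  qed
qed

definition "ylim y0 z0 t = y0 + (\<Sum>i. fst (pic y0 z0 (Suc i)) t - fst (pic y0 z0 i) t)"
definition "zlim y0 z0 t = z0 + (\<Sum>i. snd (pic y0 z0 (Suc i)) t - snd (pic y0 z0 i) t)"

lemma pic_unif:
  fixes N :: real
  assumes N: "N \<ge> 0"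
  shows "uniform_limit {-N..N} (\<lambda>n. fst (pic y0 z0 n)) (ylim y0 z0) sequentially \<and>
         uniform_limit {-N..N} (\<lambda>n. snd (pic y0 z0 n)) (zlim y0 z0) sequentially"
proof -
  obtain M where M: "\<And>u. \<bar>u\<bar> \<le> N \<Longrightarrow> \<bar>F1 u y0 z0\<bar> \<le> M \<and> \<bar>F2 u y0 z0\<bar> \<le> M"
    using exists_M by blast
  define Ms where "Ms i = 2 * M * N * (inverse (fact i) * (2*L*N)^i)" for i :: nat
  have bnd: "\<bar>fst (pic y0 z0 (Suc i)) t - fst (pic y0 z0 i) t\<bar> + \<bar>snd (pic y0 z0 (Suc i)) t - snd (pic y0 z0 i) t\<bar> \<le> Ms i"
    if t: "t \<in> {-N..N}" for t i
  proof -
    have M0: "M \<ge> 0" using M[of 0] N by auto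
    have "\<bar>t\<bar>^(Suc i) / fact (Suc i) \<le> N^(Suc i) / fact i"
      using t by (intro frac_le power_mono fact_mono) auto
    then have "2 * M * (2*L)^i * (\<bar>t\<bar>^(Suc i) / fact (Suc i)) \<le> 2 * M * (2*L)^i * (N^(Suc i) / fact i)"
      using M0 Lpos by (intro mult_left_mono) auto
    also have "\<dots> = Ms i" by (simp add: Ms_def field_simps power_mult_distrib)
    finally have r: "2 * M * (2*L)^i * (\<bar>t\<bar>^(Suc i) / fact (Suc i)) \<le> Ms i" .
    have pb: "\<bar>fst (pic y0 z0 (Suc i)) t - fst (pic y0 z0 i) t\<bar> + \<bar>snd (pic y0 z0 (Suc i)) t - snd (pic y0 z0 i) t\<bar>
       \<le> 2 * M * (2*L)^i * \<bar>t\<bar>^(Suc i) / fact (Suc i)"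
      by (rule pic_bound[OF M]) (use t in auto)
    have "2 * M * (2*L)^i * \<bar>t\<bar>^(Suc i) / fact (Suc i) = 2 * M * (2*L)^i * (\<bar>t\<bar>^(Suc i) / fact (Suc i))"
      by simp
    with pb r show ?thesis by linarith
  qed
  have bnd1: "norm (fst (pic y0 z0 (Suc n)) x - fst (pic y0 z0 n) x) \<le> Ms n"
     "norm (snd (pic y0 z0 (Suc n)) x - snd (pic y0 z0 n) x) \<le> Ms n" if "x \<in> {-N..N}" for n x
    using bnd[OF that, of n] unfolding real_norm_def by (smt (verit))+
  have sM: "summable Ms" unfolding Ms_def by (intro summable_mult summable_exp)
  have "uniform_limit {-N..N} (\<lambda>n x. \<Sum>i<n. fst (pic y0 z0 (Suc i)) x - fst (pic y0 z0 i) x)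
          (\<lambda>x. \<Sum>i. fst (pic y0 z0 (Suc i)) x - fst (pic y0 z0 i) x) sequentially"
    by (rule Weierstrass_m_test[OF _ sM]) (use bnd1 in auto)
  then have "uniform_limit {-N..N} (\<lambda>n x. y0 + (\<Sum>i<n. fst (pic y0 z0 (Suc i)) x - fst (pic y0 z0 i) x))
          (\<lambda>x. y0 + (\<Sum>i. fst (pic y0 z0 (Suc i)) x - fst (pic y0 z0 i) x)) sequentially"
    by (intro uniform_limit_add uniform_limit_const)
  moreover have tel: "(\<Sum>i<n. fst (pic y0 z0 (Suc i)) x - fst (pic y0 z0 i) x) = fst (pic y0 z0 n) x - fst (pic y0 z0 0) x" for n x
    by (rule sum_lessThan_telescope[where f="\<lambda>i. fst (pic y0 z0 i) x"])
  moreover have "(\<lambda>n x. y0 + (\<Sum>i<n. fst (pic y0 z0 (Suc i)) x - fst (pic y0 z0 i) x)) = (\<lambda>n. fst (pic y0 z0 n))"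
    by (intro ext) (simp only: tel, simp)
  ultimately have 1: "uniform_limit {-N..N} (\<lambda>n. fst (pic y0 z0 n)) (ylim y0 z0) sequentially"
    unfolding ylim_def[abs_def] by (simp only:)
  have "uniform_limit {-N..N} (\<lambda>n x. \<Sum>i<n. snd (pic y0 z0 (Suc i)) x - snd (pic y0 z0 i) x)
          (\<lambda>x. \<Sum>i. snd (pic y0 z0 (Suc i)) x - snd (pic y0 z0 i) x) sequentially"
    by (rule Weierstrass_m_test[OF _ sM]) (use bnd1 in auto)
  then have "uniform_limit {-N..N} (\<lambda>n x. z0 + (\<Sum>i<n. snd (pic y0 z0 (Suc i)) x - snd (pic y0 z0 i) x))
          (\<lambda>x. z0 + (\<Sum>i. snd (pic y0 z0 (Suc i)) x - snd (pic y0 z0 i) x)) sequentially"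
    by (intro uniform_limit_add uniform_limit_const)
  moreover have tel: "(\<Sum>i<n. snd (pic y0 z0 (Suc i)) x - snd (pic y0 z0 i) x) = snd (pic y0 z0 n) x - snd (pic y0 z0 0) x" for n x
    by (rule sum_lessThan_telescope[where f="\<lambda>i. snd (pic y0 z0 i) x"])
  moreover have "(\<lambda>n x. z0 + (\<Sum>i<n. snd (pic y0 z0 (Suc i)) x - snd (pic y0 z0 i) x)) = (\<lambda>n. snd (pic y0 z0 n))"
    by (intro ext) (simp only: tel, simp)
  ultimately have 2: "uniform_limit {-N..N} (\<lambda>n. snd (pic y0 z0 n)) (zlim y0 z0) sequentially"
    unfolding zlim_def[abs_def] by (simp only:)
  from 1 2 show ?thesis ..
qed

theorem ode_exists:
  "\<exists>y z. y 0 = y0 \<and> z 0 = z0 \<and> (\<forall>t. (y has_real_derivative F1 t (y t) (z t)) (at t) \<and>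
      (z has_real_derivative F2 t (y t) (z t)) (at t))"
proof (intro exI conjI allI)
  show "ylim y0 z0 0 = y0" by (simp add: ylim_def pic_0 del: pic.simps)
  show "zlim y0 z0 0 = z0" by (simp add: zlim_def pic_0 del: pic.simps)
  fix t :: real
  define N where "N = \<bar>t\<bar> + 1"
  have N: "N \<ge> 0" "{-N<..<N} \<subseteq> {-N..N}" "t \<in> {-N<..<N}" by (auto simp: N_def)
  have uY: "uniform_limit {-N<..<N} (\<lambda>n. fst (pic y0 z0 n)) (ylim y0 z0) sequentially"
    and uZ: "uniform_limit {-N<..<N} (\<lambda>n. snd (pic y0 z0 n)) (zlim y0 z0) sequentially"
    using uniform_limit_on_subset[OF conjunct1[OF pic_unif[OF N(1)]] N(2)]
      uniform_limit_on_subset[OF conjunct2[OF pic_unif[OF N(1)]] N(2)] by auto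
  show "(ylim y0 z0 has_real_derivative F1 t (ylim y0 z0 t) (zlim y0 z0 t)) (at t)"
    by (rule deriv_limit[where W="\<lambda>n. fst (pic y0 z0 n)" and Y="\<lambda>n. fst (pic y0 z0 n)" and Z="\<lambda>n. snd (pic y0 z0 n)" and F=F1,
          OF uY uZ uY N(3) lip1 Lpos pic_deriv(1)])
  show "(zlim y0 z0 has_real_derivative F2 t (ylim y0 z0 t) (zlim y0 z0 t)) (at t)"
    by (rule deriv_limit[where W="\<lambda>n. snd (pic y0 z0 n)" and Y="\<lambda>n. fst (pic y0 z0 n)" and Z="\<lambda>n. snd (pic y0 z0 n)" and F=F2,
          OF uY uZ uZ N(3) lip2 Lpos pic_deriv(2)])
qed

end

lemma incr_except:
  fixes f f' :: "real \<Rightarrow> real"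
  assumes ab: "a \<le> b" and c: "continuous_on {a..b} f"
    and d: "\<And>x. a < x \<Longrightarrow> x < b \<Longrightarrow> x \<noteq> r \<Longrightarrow> (f has_real_derivative f' x) (at x) \<and> f' x \<ge> 0"
  shows "f a \<le> f b"
proof (cases "a < r \<and> r < b")
  case True
  have "f a \<le> f r"
  proof (rule DERIV_nonneg_imp_increasing_open[of a r f])
    fix x assume "a < x" "x < r"
    then show "\<exists>y. (f has_real_derivative y) (at x) \<and> 0 \<le> y" using d[of x] True by auto
  qed (use True c in \<open>auto intro: continuous_on_subset\<close>)
  also have "f r \<le> f b"
  proof (rule DERIV_nonneg_imp_increasing_open[of r b f])
    fix x assume "r < x" "x < b"
    then show "\<exists>y. (f has_real_derivative y) (at x) \<and> 0 \<le> y" using d[of x] True by auto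
  qed (use True c in \<open>auto intro: continuous_on_subset\<close>)
  finally show ?thesis .
next
  case False
  show ?thesis
    by (rule DERIV_nonneg_imp_increasing_open[OF ab _ c]) (use False d in \<open>force\<close>)
qed

lemma gronwall_zero:
  fixes E E' :: "real \<Rightarrow> real"
  assumes cont: "continuous_on UNIV E" and nonneg: "\<And>x. E x \<ge> 0" and E0: "E 0 = 0"
    and d: "\<And>x. x \<noteq> r \<Longrightarrow> (E has_real_derivative E' x) (at x)"
    and b: "\<And>x. x \<noteq> r \<Longrightarrow> \<bar>E' x\<bar> \<le> C * E x"
  shows "E t = 0"
proof (cases "0 \<le> t")
  case True
  have "(\<lambda>x. - (E x * exp (- C * x))) 0 \<le> (\<lambda>x. - (E x * exp (- C * x))) t"
  proof (rule incr_except[where r=r and f'="\<lambda>x. - ((E' x - C * E x) * exp (- C * x))", OF True])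
    show "continuous_on {0..t} (\<lambda>x. - (E x * exp (- C * x)))"
      using cont by (auto intro!: continuous_intros intro: continuous_on_subset)
    fix x assume x: "x \<noteq> r"
    have de: "((\<lambda>x. exp (- C * x)) has_real_derivative exp (- C * x) * (- C)) (at x)"
      by (auto intro!: derivative_eq_intros)
    have "((\<lambda>x. - (E x * exp (- C * x))) has_real_derivative - (E x * (exp (- C * x) * (- C)) + E' x * exp (- C * x)) ) (at x)"
      by (rule DERIV_minus, rule DERIV_mult'[OF d[OF x] de])
    moreover have "- (E x * (exp (- C * x) * (- C)) + E' x * exp (- C * x)) = - ((E' x - C * E x) * exp (- C * x))"
      by (simp add: algebra_simps)
    moreover have "- ((E' x - C * E x) * exp (- C * x)) \<ge> 0"
    proof -
      have "(E' x - C * E x) * exp (- C * x) \<le> 0" using b[OF x] by (intro mult_nonpos_nonneg) auto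
      then show "- ((E' x - C * E x) * exp (- C * x)) \<ge> 0" by simp
    qed
    ultimately show "((\<lambda>x. - (E x * exp (- C * x))) has_real_derivative - ((E' x - C * E x) * exp (- C * x))) (at x) \<and>
      0 \<le> - ((E' x - C * E x) * exp (- C * x))" by simp
  qed
  then have "E t * exp (- C * t) \<le> 0" using E0 by simp
  then have "E t \<le> 0" by (simp add: mult_le_0_iff)
  then show ?thesis using nonneg[of t] by simp
next
  case False
  have "(\<lambda>x. E x * exp (C * x)) t \<le> (\<lambda>x. E x * exp (C * x)) 0"
  proof (rule incr_except[where r=r and a=t and b=0 and f="\<lambda>x. E x * exp (C * x)" and f'="\<lambda>x. (E' x + C * E x) * exp (C * x)"])
    show "t \<le> 0" using False by simp
    show "continuous_on {t..0} (\<lambda>x. E x * exp (C * x))"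
      using cont by (auto intro!: continuous_intros intro: continuous_on_subset)
    fix x assume x: "x \<noteq> r"
    have de: "((\<lambda>x. exp (C * x)) has_real_derivative exp (C * x) * C) (at x)"
      by (auto intro!: derivative_eq_intros)
    have "((\<lambda>x. E x * exp (C * x)) has_real_derivative (E x * (exp (C * x) * C) + E' x * exp (C * x))) (at x)"
      by (rule DERIV_mult'[OF d[OF x] de])
    moreover have "E x * (exp (C * x) * C) + E' x * exp (C * x) = (E' x + C * E x) * exp (C * x)"
      by (simp add: algebra_simps)
    moreover have "(E' x + C * E x) * exp (C * x) \<ge> 0"
    proof -
      have "E' x + C * E x \<ge> 0" using b[OF x] by (simp add: abs_le_iff)
      then show "(E' x + C * E x) * exp (C * x) \<ge> 0" by simp
    qed
    ultimately show "((\<lambda>x. E x * exp (C * x)) has_real_derivative (E' x + C * E x) * exp (C * x)) (at x) \<and>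
      0 \<le> (E' x + C * E x) * exp (C * x)" by simp
  qed
  then have "E t * exp (C * t) \<le> 0" using E0 by simp
  then have "E t \<le> 0" by (simp add: mult_le_0_iff)
  then show ?thesis using nonneg[of t] by simp
qed

lemma lip_bound:
  fixes f f' :: "real \<Rightarrow> real"
  assumes c: "continuous_on {lo..} f"
    and d: "\<And>x. lo < x \<Longrightarrow> x \<noteq> r \<Longrightarrow> (f has_real_derivative f' x) (at x)"
    and b: "\<And>x. lo < x \<Longrightarrow> x \<noteq> r \<Longrightarrow> \<bar>f' x\<bar> \<le> M"
    and x: "lo \<le> x" and y: "lo \<le> y"
  shows "\<bar>f x - f y\<bar> \<le> M * \<bar>x - y\<bar>"
proof -
  have main: "\<bar>f b - f a\<bar> \<le> M * (b - a)" if ab: "a \<le> b" "lo \<le> a" for a b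
  proof -
    have cab: "continuous_on {a..b} f" using c ab by (auto intro: continuous_on_subset)
    have "(\<lambda>u. M * u - f u) a \<le> (\<lambda>u. M * u - f u) b"
    proof (rule incr_except[where r=r and f'="\<lambda>u. M - f' u", OF ab(1)])
      show "continuous_on {a..b} (\<lambda>u. M * u - f u)" using cab by (intro continuous_intros)
      fix u assume u: "a < u" "u < b" "u \<noteq> r"
      then have "lo < u" using ab by simp
      then show "((\<lambda>u. M * u - f u) has_real_derivative M - f' u) (at u) \<and> 0 \<le> M - f' u"
        using d[of u] b[of u] u by (auto intro!: derivative_eq_intros)
    qed
    moreover have "(\<lambda>u. M * u + f u) a \<le> (\<lambda>u. M * u + f u) b"
    proof (rule incr_except[where r=r and f'="\<lambda>u. M + f' u", OF ab(1)])
      show "continuous_on {a..b} (\<lambda>u. M * u + f u)" using cab by (intro continuous_intros)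
      fix u assume u: "a < u" "u < b" "u \<noteq> r"
      then have "lo < u" using ab by simp
      then show "((\<lambda>u. M * u + f u) has_real_derivative M + f' u) (at u) \<and> 0 \<le> M + f' u"
        using d[of u] b[of u] u by (auto intro!: derivative_eq_intros)
    qed
    ultimately show ?thesis by (auto simp: algebra_simps abs_le_iff)
  qed
  show ?thesis
  proof (cases "x \<le> y")
    case True
    then show ?thesis using main[of x y] x by (simp add: abs_minus_commute)
  next
    case False
    then show ?thesis using main[of y x] y by simp
  qed
qed

lemma tanh_lip: "\<bar>tanh a - tanh (b::real)\<bar> \<le> 1 * \<bar>a - b\<bar>"
proof (rule lip_bound[where f=tanh and lo="min a b" and r="min a b" and f'="\<lambda>x. 1 - tanh x ^ 2" and M=1])
  show "continuous_on {min a b..} tanh" by (intro continuous_intros) auto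
  fix x :: real
  have "((\<lambda>x. tanh x) has_real_derivative (1 - tanh x ^ 2) * 1) (at x)"
    by (rule has_field_derivative_tanh) (auto intro: DERIV_ident)
  then show "(tanh has_real_derivative 1 - tanh x ^ 2) (at x)" by simp
  have "\<bar>tanh x\<bar> \<le> 1" using tanh_real_bounds[of x] by auto
  then have "tanh x ^ 2 \<le> 1" by (simp add: abs_square_le_1)
  moreover have "tanh x ^ 2 \<ge> 0" by simp
  ultimately show "\<bar>1 - tanh x ^ 2\<bar> \<le> 1" by linarith
next
  show "min a b \<le> a" by simp
  show "min a b \<le> b" by simp
qed

lemma twoprod:
  fixes d e K :: real
  assumes "\<bar>K\<bar> \<le> 1"
  shows "\<bar>2*d*e + 2*e*(-K*d)\<bar> \<le> 2*(d^2 + e^2)"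
proof -
  have h1: "2*d*e + 2*e*(-K*d) = 2*(d*e)*(1-K)" by (simp add: algebra_simps)
  have "0 \<le> (\<bar>d\<bar> - \<bar>e\<bar>)^2" by simp
  then have "2*\<bar>d\<bar>*\<bar>e\<bar> \<le> \<bar>d\<bar>^2 + \<bar>e\<bar>^2" by (simp add: power2_eq_square algebra_simps)
  then have h2: "2*\<bar>d*e\<bar> \<le> d^2 + e^2" by (simp add: abs_mult)
  have h3: "\<bar>1 - K\<bar> \<le> 2" using assms by auto
  have "\<bar>2*(d*e)*(1-K)\<bar> = 2*\<bar>d*e\<bar>*\<bar>1-K\<bar>" by (simp add: abs_mult)
  also have "\<dots> \<le> 2*\<bar>d*e\<bar>*2" by (intro mult_left_mono h3) auto
  also have "\<dots> \<le> 2*(d^2+e^2)" using h2 by simp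
  finally show ?thesis using h1 by simp
qed

locale wsetup =
  fixes \<phi> :: "real \<Rightarrow> real" and r \<epsilon> :: real
  assumes cut: "cutoff \<phi>" and eps0: "0 \<le> \<epsilon>" and eps1: "\<epsilon> < 1/8"
    and rpos: "0 < r" and rlt: "r < pi/3"
begin

abbreviation "K \<equiv> Kpar \<phi> r \<epsilon>"

lemma phi_props: "0 \<le> \<phi> x" "\<phi> x \<le> 1" "x \<le> 0 \<Longrightarrow> \<phi> x = 0" "x \<ge> 1 \<Longrightarrow> \<phi> x = 1"
  using cut by (auto simp: cutoff_def)

lemma K_bound: "\<bar>K x\<bar> \<le> 1"
  using phi_props[of "(x - r) / \<epsilon>"] by (auto simp: Kpar_def heaviside_def)

lemma K_left: "x \<le> r \<Longrightarrow> K x = 1"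
proof -
  assume x: "x \<le> r"
  show "K x = 1"
  proof (cases "\<epsilon> > 0")
    case True
    have "(x - r) / \<epsilon> \<le> 0" using x True by (simp add: divide_nonpos_pos)
    then show ?thesis using True phi_props(3) by (simp add: Kpar_def)
  next
    case False
    then show ?thesis using x by (simp add: Kpar_def heaviside_def)
  qed
qed

lemma K_right: "r + \<epsilon> < x \<Longrightarrow> K x = -1"
proof -
  assume x: "r + \<epsilon> < x"
  show "K x = -1"
  proof (cases "\<epsilon> > 0")
    case True
    have "(x - r) / \<epsilon> \<ge> 1" using x True by (simp add: field_simps)
    then show ?thesis using True phi_props(4) by (simp add: Kpar_def)
  next
    case False
    have "x - r > 0" using x eps0 False by simp
    then show ?thesis using False by (simp add: Kpar_def heaviside_def)
  qed
qed

lemma K_cont: "\<epsilon> > 0 \<Longrightarrow> continuous_on UNIV K"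
proof -
  assume e: "\<epsilon> > 0"
  have "\<phi> differentiable (at x)" for x
    using cut unfolding cutoff_def smooth_fun_def by (metis funpow_0)
  then have c\<phi>: "continuous_on UNIV \<phi>"
    by (intro continuous_at_imp_continuous_on ballI differentiable_imp_continuous_within)
  have "continuous_on UNIV (\<lambda>x. 1 - 2 * \<phi> ((x - r) / \<epsilon>))"
    using e by (intro continuous_intros continuous_on_compose2[OF c\<phi>]) auto
  moreover have "K = (\<lambda>x. 1 - 2 * \<phi> ((x - r) / \<epsilon>))"
    using e by (simp add: Kpar_def fun_eq_iff)
  ultimately show ?thesis by simp
qed

lemma warp_exists_pos:
  assumes e: "\<epsilon> > 0"
  shows "\<exists>A. is_warp \<phi> r \<epsilon> A"
proof -
  interpret o: ode2 "\<lambda>t y z. z" "\<lambda>t y z. - K t * y" 1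
  proof
    fix Y Z :: "real \<Rightarrow> real"
    assume cY: "continuous_on UNIV Y" and cZ: "continuous_on UNIV Z"
    show "continuous_on UNIV (\<lambda>t. Z t)" using cZ by simp
    show "continuous_on UNIV (\<lambda>t. - K t * Y t)"
      using K_cont[OF e] cY by (intro continuous_intros)
  next
    fix t y z y' z' :: real
    show "\<bar>z - z'\<bar> \<le> 1 * (\<bar>y - y'\<bar> + \<bar>z - z'\<bar>)" by simp
    have "\<bar>- K t * y - - K t * y'\<bar> = \<bar>K t\<bar> * \<bar>y - y'\<bar>" by (simp add: abs_mult[symmetric] algebra_simps)
    also have "\<dots> \<le> 1 * \<bar>y - y'\<bar>" by (intro mult_right_mono K_bound) auto
    finally show "\<bar>- K t * y - - K t * y'\<bar> \<le> 1 * (\<bar>y - y'\<bar> + \<bar>z - z'\<bar>)" by simp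
  qed simp
  obtain y z where yz: "y 0 = 0" "z 0 = 1"
    "\<And>t. (y has_real_derivative z t) (at t)" "\<And>t. (z has_real_derivative - K t * y t) (at t)"
    using o.ode_exists[of 0 1] by blast
  have "continuous_on UNIV z"
    using yz(4) by (intro continuous_at_imp_continuous_on ballI DERIV_isCont)
  then show ?thesis unfolding is_warp_def using yz by blast
qed

definition "A0 x = (if x \<in> {..r} then sin x else sin r * cosh (x - r) + cos r * sinh (x - r))"
definition "B0 x = (if x \<in> {..r} then cos x else sin r * sinh (x - r) + cos r * cosh (x - r))"

lemma A0_deriv: "(A0 has_real_derivative B0 x) (at x)"
proof -
  let ?S = "{..r}" and ?T = "{r<..}"
  have un: "?S \<union> ?T = UNIV" by auto
  have "((\<lambda>x. if x \<in> ?S then sin x else sin r * cosh (x - r) + cos r * sinh (x - r)) has_derivative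
      (if x \<in> ?S then (*) (cos x) else (*) (sin r * sinh (x - r) + cos r * cosh (x - r)))) (at x within (?S \<union> ?T))"
  proof (rule has_derivative_If_within_closures)
    show "(sin has_derivative (*) (cos x)) (at x within ?S \<union> (closure ?S \<inter> closure ?T))"
      by (rule has_derivative_at_withinI) (simp add: has_field_derivative_def[symmetric] DERIV_sin)
    have "((\<lambda>x. sin r * cosh (x - r) + cos r * sinh (x - r)) has_real_derivative
        sin r * sinh (x - r) + cos r * cosh (x - r)) (at x)"
      by (auto intro!: derivative_eq_intros)
    then show "((\<lambda>x. sin r * cosh (x - r) + cos r * sinh (x - r)) has_derivative
        (*) (sin r * sinh (x - r) + cos r * cosh (x - r))) (at x within ?T \<union> (closure ?S \<inter> closure ?T))"
      unfolding has_field_derivative_def by (rule has_derivative_at_withinI)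
    show "x \<in> closure ?S \<Longrightarrow> x \<in> closure ?T \<Longrightarrow> sin x = sin r * cosh (x - r) + cos r * sinh (x - r)"
      by (simp add: closure_closed)
    show "x \<in> closure ?S \<Longrightarrow> x \<in> closure ?T \<Longrightarrow> (*) (cos x) = (*) (sin r * sinh (x - r) + cos r * cosh (x - r))"
      by (simp add: closure_closed)
    show "x \<in> ?S \<union> ?T" by auto
  qed
  moreover have "(if x \<in> ?S then (*) (cos x) else (*) (sin r * sinh (x - r) + cos r * cosh (x - r))) = (*) (B0 x)"
    by (simp add: B0_def)
  ultimately show ?thesis unfolding un has_field_derivative_def by (simp add: A0_def[abs_def])
qed

lemma B0_cont: "continuous_on UNIV B0"
proof -
  have "continuous_on ({..r} \<union> {r..}) (\<lambda>x. if x \<in> {..r} then cos x else sin r * sinh (x - r) + cos r * cosh (x - r))"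
    by (rule continuous_on_If) (auto intro!: continuous_intros)
  moreover have "{..r} \<union> {r..} = (UNIV :: real set)" by auto
  ultimately show ?thesis by (simp add: B0_def[abs_def])
qed

lemma B0_deriv: "x \<noteq> r \<Longrightarrow> \<epsilon> = 0 \<Longrightarrow> (B0 has_real_derivative - K x * A0 x) (at x)"
proof -
  assume x: "x \<noteq> r" and e: "\<epsilon> = 0"
  show ?thesis
  proof (cases "x < r")
    case True
    have "(cos has_real_derivative - sin x) (at x)" by (rule DERIV_cos)
    then have "(B0 has_real_derivative - sin x) (at x)"
      by (rule has_field_derivative_transform_within_open[where S="{..<r}"]) (use True in \<open>auto simp: B0_def\<close>)
    moreover have "K x = 1" "A0 x = sin x" using True K_left[of x] by (auto simp: A0_def)
    ultimately show ?thesis by simp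
  next
    case False
    then have xr: "r < x" using x by simp
    have "((\<lambda>x. sin r * sinh (x - r) + cos r * cosh (x - r)) has_real_derivative
        sin r * cosh (x - r) + cos r * sinh (x - r)) (at x)"
      by (auto intro!: derivative_eq_intros)
    then have "(B0 has_real_derivative sin r * cosh (x - r) + cos r * sinh (x - r)) (at x)"
      by (rule has_field_derivative_transform_within_open[where S="{r<..}"]) (use xr in \<open>auto simp: B0_def\<close>)
    moreover have "K x = -1" using K_right[of x] xr e by simp
    moreover have "A0 x = sin r * cosh (x - r) + cos r * sinh (x - r)" using xr by (simp add: A0_def)
    ultimately show ?thesis by simp
  qed
qed

lemma warp_exists: "\<exists>A. is_warp \<phi> r \<epsilon> A"
proof (cases "\<epsilon> > 0")
  case True
  then show ?thesis by (rule warp_exists_pos)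
next
  case False
  then have e: "\<epsilon> = 0" using eps0 by simp
  have "is_warp \<phi> r \<epsilon> A0"
    unfolding is_warp_def
  proof (intro exI[of _ B0] conjI allI impI)
    show "A0 0 = 0" using rpos by (simp add: A0_def)
    show "B0 0 = 1" using rpos by (simp add: B0_def)
    show "(A0 has_real_derivative B0 x) (at x)" for x by (rule A0_deriv)
    show "continuous_on UNIV B0" by (rule B0_cont)
    show "(B0 has_real_derivative - K x * A0 x) (at x)" if "\<epsilon> = 0 \<longrightarrow> x \<noteq> r" for x
      using B0_deriv[of x] that e by simp
  qed
  then show ?thesis by blast
qed

lemma warp_unique:
  assumes 1: "is_warp \<phi> r \<epsilon> A1" and 2: "is_warp \<phi> r \<epsilon> A2"
  shows "A1 = A2"
proof
  fix t
  obtain B1 where B1: "A1 0 = 0" "B1 0 = 1" "\<And>x. (A1 has_real_derivative B1 x) (at x)" "continuous_on UNIV B1"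
    "\<And>x. (\<epsilon> = 0 \<longrightarrow> x \<noteq> r) \<Longrightarrow> (B1 has_real_derivative (- K x * A1 x)) (at x)"
    using 1 unfolding is_warp_def by blast
  obtain B2 where B2: "A2 0 = 0" "B2 0 = 1" "\<And>x. (A2 has_real_derivative B2 x) (at x)" "continuous_on UNIV B2"
    "\<And>x. (\<epsilon> = 0 \<longrightarrow> x \<noteq> r) \<Longrightarrow> (B2 has_real_derivative (- K x * A2 x)) (at x)"
    using 2 unfolding is_warp_def by blast
  define E where "E x = (A1 x - A2 x)^2 + (B1 x - B2 x)^2" for x
  define E' where "E' x = 2*(A1 x - A2 x)*(B1 x - B2 x) + 2*(B1 x - B2 x)*(- K x * (A1 x - A2 x))" for x
  have cA: "continuous_on UNIV A1" "continuous_on UNIV A2"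
    using B1(3) B2(3) by (auto intro!: continuous_at_imp_continuous_on DERIV_isCont)
  have "E t = 0"
  proof (rule gronwall_zero[where r=r and E=E and t=t and E'=E' and C=2])
    show "continuous_on UNIV E" unfolding E_def[abs_def] using cA B1(4) B2(4) by (intro continuous_intros)
    show "0 \<le> E x" for x by (simp add: E_def)
    show "E 0 = 0" using B1 B2 by (simp add: E_def)
    fix x assume x: "x \<noteq> r"
    have d1: "(B1 has_real_derivative (- K x * A1 x)) (at x)" and d2: "(B2 has_real_derivative (- K x * A2 x)) (at x)"
      using B1(5) B2(5) x by auto
    show "(E has_real_derivative E' x) (at x)"
      unfolding E_def[abs_def] E'_def
      by (rule derivative_eq_intros B1(3) B2(3) d1 d2 refl | simp add: algebra_simps)+
    show "\<bar>E' x\<bar> \<le> 2 * E x" unfolding E'_def E_def by (rule twoprod[OF K_bound])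
  qed
  then show "A1 t = A2 t" by (simp add: E_def)
qed

lemma warp_is: "is_warp \<phi> r \<epsilon> (warpA \<phi> r \<epsilon>)"
  unfolding warpA_def using warp_exists warp_unique by (metis theI)

end

context wsetup begin

abbreviation "A \<equiv> warpA \<phi> r \<epsilon>"
abbreviation "B \<equiv> warpA' \<phi> r \<epsilon>"

lemma AB: "A 0 = 0" "B 0 = 1" "\<And>x. (A has_real_derivative B x) (at x)" "continuous_on UNIV B"
   "\<And>x. (\<epsilon> = 0 \<longrightarrow> x \<noteq> r) \<Longrightarrow> (B has_real_derivative - K x * A x) (at x)"
proof -
  obtain B' where B': "A 0 = 0" "B' 0 = 1" "\<And>x. (A has_real_derivative B' x) (at x)" "continuous_on UNIV B'"
    "\<And>x. (\<epsilon> = 0 \<longrightarrow> x \<noteq> r) \<Longrightarrow> (B' has_real_derivative - K x * A x) (at x)"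
    using warp_is unfolding is_warp_def by blast
  have BB: "B = B'"
    unfolding warpA'_def by (rule ext) (rule DERIV_imp_deriv[OF B'(3)])
  show "A 0 = 0" "B 0 = 1" "\<And>x. (A has_real_derivative B x) (at x)" "continuous_on UNIV B"
   "\<And>x. (\<epsilon> = 0 \<longrightarrow> x \<noteq> r) \<Longrightarrow> (B has_real_derivative - K x * A x) (at x)"
    using B' unfolding BB by auto
qed

lemma A_cont: "continuous_on UNIV A"
  using AB(3) by (intro continuous_at_imp_continuous_on ballI DERIV_isCont)

lemma left_part: "x \<le> r \<Longrightarrow> A x = sin x \<and> B x = cos x"
proof -
  assume xr: "x \<le> r"
  define D where "D y = (A y - sin y)^2 + (B y - cos y)^2" for y
  have cD: "continuous_on UNIV D" unfolding D_def[abs_def] using A_cont AB(4) by (intro continuous_intros)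
  have dD: "(D has_real_derivative 0) (at y)" if y: "y < r" for y
  proof -
    have dB: "(B has_real_derivative - K y * A y) (at y)" using AB(5)[of y] y by auto
    have K1: "K y = 1" using K_left[of y] y by simp
    have "(D has_real_derivative 2*(A y - sin y)*(B y - cos y) + 2*(B y - cos y)*(- K y * A y + sin y)) (at y)"
      unfolding D_def[abs_def]
      by (rule derivative_eq_intros AB(3) dB DERIV_sin DERIV_cos refl | simp add: algebra_simps)+
    then show ?thesis using K1 by (simp add: algebra_simps)
  qed
  have D0: "D 0 = 0" using AB(1,2) by (simp add: D_def)
  have "D x = 0"
  proof (cases "0 < x")
    case True
    have "D x = D 0"
      by (rule DERIV_isconst2[of 0 x D x]) (use True xr cD dD in \<open>auto intro: continuous_on_subset\<close>)
    then show ?thesis using D0 by simp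
  next
    case False
    show ?thesis
    proof (cases "x = 0")
      case True then show ?thesis using D0 by simp
    next
      case False2: False
      then have "x < 0" using False by simp
      then have "D 0 = D x"
        by (intro DERIV_isconst2[of x 0 D 0]) (use rpos cD dD in \<open>auto intro: continuous_on_subset\<close>)
      then show ?thesis using D0 by simp
    qed
  qed
  then show "A x = sin x \<and> B x = cos x"
    unfolding D_def by (simp add: add_nonneg_eq_0_iff)
qed

lemma cos_r: "cos r > 1/2"
proof -
  have "cos (pi/3) < cos r" using rpos rlt by (subst cos_mono_less_eq) auto
  then show ?thesis by (simp add: cos_60)
qed

abbreviation "b \<equiv> r + \<epsilon>"

lemma mid_part: "r \<le> x \<Longrightarrow> x \<le> b \<Longrightarrow> A x ^ 2 + B x ^ 2 \<le> 4 \<and> B x \<ge> 1/4"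
proof -
  assume x: "r \<le> x" "x \<le> b"
  show ?thesis
  proof (cases "\<epsilon> = 0")
    case True
    then have "x = r" using x by simp
    then show ?thesis using left_part[of r] cos_r by auto
  next
    case False
    then have e: "\<epsilon> > 0" using eps0 by simp
    have dA: "(A has_real_derivative B y) (at y)" for y by (rule AB(3))
    have dB: "(B has_real_derivative - K y * A y) (at y)" for y using AB(5)[of y] e by auto
    define N where "N y = A y ^ 2 + B y ^ 2" for y
    have cN: "continuous_on UNIV N" unfolding N_def[abs_def] using A_cont AB(4) by (intro continuous_intros)
    have Nr: "N r = 1" using left_part[of r] by (simp add: N_def)
    have Nbound: "N y \<le> 4" if y: "r \<le> y" "y \<le> b" for y
    proof -
      have "(\<lambda>z. - (N z * exp (- 2 * (z - r)))) r \<le> (\<lambda>z. - (N z * exp (- 2 * (z - r)))) y"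
      proof (rule incr_except[where r=r and a=r and b=y and f="\<lambda>z. - (N z * exp (- 2 * (z - r)))"
            and f'="\<lambda>z. - ((2*A z*B z + 2*B z*(- K z * A z) - 2 * N z) * exp (- 2 * (z - r)))"])
        show "r \<le> y" using y by simp
        show "continuous_on {r..y} (\<lambda>z. - (N z * exp (- 2 * (z - r))))"
          using cN by (auto intro!: continuous_intros intro: continuous_on_subset)
        fix z assume z: "r < z" "z < y" "z \<noteq> r"
        have "((\<lambda>z. - (N z * exp (- 2 * (z - r)))) has_real_derivative
           - ((2*A z*B z + 2*B z*(- K z * A z) - 2 * N z) * exp (- 2 * (z - r)))) (at z)"
          unfolding N_def[abs_def]
          by (rule derivative_eq_intros dA dB refl | simp add: algebra_simps)+
        moreover have "(2*A z*B z + 2*B z*(- K z * A z) - 2 * N z) * exp (- 2 * (z - r)) \<le> 0"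
        proof (rule mult_nonpos_nonneg)
          have "\<bar>2*A z*B z + 2*B z*(- K z * A z)\<bar> \<le> 2*(A z^2 + B z^2)" by (rule twoprod[OF K_bound])
          then show "2*A z*B z + 2*B z*(- K z * A z) - 2 * N z \<le> 0" by (simp add: N_def abs_le_iff)
        qed simp
        ultimately show "((\<lambda>z. - (N z * exp (- 2 * (z - r)))) has_real_derivative
           - ((2*A z*B z + 2*B z*(- K z * A z) - 2 * N z) * exp (- 2 * (z - r)))) (at z) \<and>
           0 \<le> - ((2*A z*B z + 2*B z*(- K z * A z) - 2 * N z) * exp (- 2 * (z - r)))" by simp
      qed
      then have "N y * exp (- 2 * (y - r)) \<le> 1" using Nr by simp
      note le1 = this
      have eq1: "exp (- 2 * (y - r)) * exp (2 * (y - r)) = 1"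
      proof -
        have "exp (- 2 * (y - r)) * exp (2 * (y - r)) = exp (- 2 * (y - r) + 2 * (y - r))"
          by (rule exp_add[symmetric])
        then show ?thesis by simp
      qed
      have "N y = (N y * exp (- 2 * (y - r))) * exp (2 * (y - r))"
        using eq1 by (simp add: mult.assoc)
      also have "\<dots> \<le> 1 * exp (2 * (y - r))"
        using le1 by (intro mult_right_mono) auto
      finally have "N y \<le> exp (2 * (y - r))" by simp
      also have "\<dots> \<le> exp 1" using y eps1 by simp
      also have "\<dots> \<le> 4" using exp_le by simp
      finally show ?thesis .
    qed
    have Abound: "\<bar>A y\<bar> \<le> 2" if y: "r \<le> y" "y \<le> b" for y
    proof -
      have "(A y)^2 \<le> 4" using Nbound[OF y] zero_le_power2[of "B y"] unfolding N_def by linarith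
      then have "\<bar>A y\<bar>^2 \<le> 2^2" by simp
      then show ?thesis by (rule power2_le_imp_le) simp
    qed
    have "(\<lambda>z. B z + 2 * z) r \<le> (\<lambda>z. B z + 2 * z) x"
    proof (rule incr_except[where r=r and a=r and b=x and f="\<lambda>z. B z + 2 * z" and f'="\<lambda>z. - K z * A z + 2"])
      show "r \<le> x" using x by simp
      show "continuous_on {r..x} (\<lambda>z. B z + 2 * z)"
        using AB(4) by (auto intro!: continuous_intros intro: continuous_on_subset)
      fix z assume z: "r < z" "z < x" "z \<noteq> r"
      have "((\<lambda>z. B z + 2 * z) has_real_derivative - K z * A z + 2) (at z)"
        by (rule derivative_eq_intros dB refl | simp)+
      moreover have "\<bar>K z * A z\<bar> \<le> 2"
      proof -
        have "\<bar>K z * A z\<bar> = \<bar>K z\<bar> * \<bar>A z\<bar>" by (simp add: abs_mult)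
        also have "\<dots> \<le> 1 * 2" using K_bound[of z] Abound[of z] z x by (intro mult_mono) auto
        finally show ?thesis by simp
      qed
      ultimately show "((\<lambda>z. B z + 2 * z) has_real_derivative - K z * A z + 2) (at z) \<and> 0 \<le> - K z * A z + 2"
        by (auto simp: abs_le_iff)
    qed
    then have "B x \<ge> cos r - 2 * (x - r)" using left_part[of r] by simp
    moreover have "x - r \<le> \<epsilon>" using x by simp
    ultimately have "B x \<ge> 1/4" using cos_r eps1 by (simp add: field_simps)
    then show ?thesis using Nbound[OF x] by (simp add: N_def)
  qed
qed

lemma first_part: "0 \<le> x \<Longrightarrow> x \<le> b \<Longrightarrow> B x \<ge> 1/4 \<and> \<bar>A x\<bar> \<le> 2 \<and> \<bar>B x\<bar> \<le> 2"
proof -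
  assume x: "0 \<le> x" "x \<le> b"
  show ?thesis
  proof (cases "x \<le> r")
    case True
    have c: "cos x \<ge> cos r" using True x rpos rlt by (intro cos_monotone_0_pi_le) auto
    have ab: "A x = sin x" "B x = cos x" using left_part[OF True] by auto
    have "\<bar>sin x\<bar> \<le> 1" "\<bar>cos x\<bar> \<le> 1" by (rule abs_sin_le_one, rule abs_cos_le_one)
    then show ?thesis unfolding ab using c cos_r by linarith
  next
    case False
    then have m: "A x ^ 2 + B x ^ 2 \<le> 4 \<and> B x \<ge> 1/4" using mid_part[of x] x by auto
    have "(A x)^2 \<le> 4" "(B x)^2 \<le> 4" using m zero_le_power2[of "A x"] zero_le_power2[of "B x"] by linarith+
    then have "\<bar>A x\<bar>^2 \<le> 2^2" "\<bar>B x\<bar>^2 \<le> 2^2" by auto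
    then have "\<bar>A x\<bar> \<le> 2" "\<bar>B x\<bar> \<le> 2" by (auto intro: power2_le_imp_le)
    then show ?thesis using m by auto
  qed
qed

end

lemma exp_cancel1: "X * exp (- a) = u \<Longrightarrow> X = u * exp (a::real)"
  by (auto simp: exp_minus field_simps)

lemma exp_cancel2: "X * exp a = v \<Longrightarrow> X = v * exp (- (a::real))"
  by (auto simp: exp_minus field_simps)

context wsetup begin

lemma K_neg: "b < x \<Longrightarrow> K x = -1" using K_right by simp

lemma A_ge_first: "0 \<le> x \<Longrightarrow> x \<le> b \<Longrightarrow> A x \<ge> x/4"
proof -
  assume x: "0 \<le> x" "x \<le> b"
  have "(\<lambda>z. A z - z/4) 0 \<le> (\<lambda>z. A z - z/4) x"
  proof (rule incr_except[where r=r and a=0 and b=x and f="\<lambda>z. A z - z/4" and f'="\<lambda>z. B z - 1/4"])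
    show "0 \<le> x" using x by simp
    show "continuous_on {0..x} (\<lambda>z. A z - z/4)"
      using A_cont by (auto intro!: continuous_intros intro: continuous_on_subset)
    fix z assume z: "0 < z" "z < x" "z \<noteq> r"
    have "((\<lambda>z. A z - z/4) has_real_derivative B z - 1/4) (at z)"
      by (rule derivative_eq_intros AB(3) refl | simp)+
    then show "((\<lambda>z. A z - z/4) has_real_derivative B z - 1/4) (at z) \<and> 0 \<le> B z - 1/4"
      using first_part[of z] z x by auto
  qed
  then show ?thesis using AB(1) by simp
qed

lemma right_part:
  assumes x: "b \<le> x"
  shows "A x + B x = (A b + B b) * exp (x - b)" "B x - A x = (B b - A b) * exp (- (x - b))"
proof -
  have dA: "(A has_real_derivative B y) (at y)" for y by (rule AB(3))
  have dB: "(B has_real_derivative A y) (at y)" if y: "b < y" for y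
  proof -
    have "y \<noteq> r" using y eps0 by simp
    then have "(B has_real_derivative - K y * A y) (at y)" using AB(5)[of y] by auto
    then show ?thesis using K_neg[OF y] by simp
  qed
  define P where "P y = (A y + B y) * exp (- (y - b))" for y
  define Q where "Q y = (B y - A y) * exp (y - b)" for y
  have cP: "continuous_on UNIV P" unfolding P_def[abs_def] using A_cont AB(4) by (intro continuous_intros)
  have cQ: "continuous_on UNIV Q" unfolding Q_def[abs_def] using A_cont AB(4) by (intro continuous_intros)
  have dP: "(P has_real_derivative 0) (at y)" if y: "b < y" for y
  proof -
    have "(P has_real_derivative (B y + A y) * exp (- (y - b)) + (A y + B y) * (exp (- (y - b)) * (- 1))) (at y)"
      unfolding P_def[abs_def] by (rule derivative_eq_intros dA dB[OF y] refl | simp)+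
    then show ?thesis by (simp add: algebra_simps)
  qed
  have dQ: "(Q has_real_derivative 0) (at y)" if y: "b < y" for y
  proof -
    have "(Q has_real_derivative (A y - B y) * exp (y - b) + (B y - A y) * (exp (y - b) * 1)) (at y)"
      unfolding Q_def[abs_def] by (rule derivative_eq_intros dA dB[OF y] refl | simp)+
    then show ?thesis by (simp add: algebra_simps)
  qed
  have "P x = P b \<and> Q x = Q b"
  proof (cases "b < x")
    case True
    have "P x = P b" by (rule DERIV_isconst2[of b x P x]) (use True cP dP in \<open>auto intro: continuous_on_subset\<close>)
    moreover have "Q x = Q b" by (rule DERIV_isconst2[of b x Q x]) (use True cQ dQ in \<open>auto intro: continuous_on_subset\<close>)
    ultimately show ?thesis by simp
  next
    case False
    then have "x = b" using x by simp
    then show ?thesis by simp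
  qed
  then have "(A x + B x) * exp (- (x - b)) = A b + B b" "(B x - A x) * exp (x - b) = B b - A b"
    by (auto simp: P_def Q_def)
  then show "A x + B x = (A b + B b) * exp (x - b)" "B x - A x = (B b - A b) * exp (- (x - b))"
    by (auto dest: exp_cancel1 exp_cancel2)
qed

lemma Ab_nonneg: "A b \<ge> 0" using A_ge_first[of b] eps0 rpos by simp

lemma B_ge: "0 \<le> x \<Longrightarrow> B x \<ge> 1/8"
proof -
  assume x0: "0 \<le> x"
  show ?thesis
  proof (cases "x \<le> b")
    case True then show ?thesis using first_part[of x] x0 by auto
  next
    case False
    then have xb: "b \<le> x" by simp
    define u where "u = A b + B b"
    define v where "v = B b - A b"
    define y where "y = x - b"
    have y0: "y \<ge> 0" using xb by (simp add: y_def)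
    have Bb: "B b \<ge> 1/4" using first_part[of b] eps0 rpos by auto
    have u: "u \<ge> 1/4" using Bb Ab_nonneg by (simp add: u_def)
    have Bx: "B x = (u * exp y + v * exp (- y)) / 2"
      using right_part[OF xb] by (simp add: u_def v_def y_def field_simps)
    have e1: "exp y \<ge> 1" using y0 by simp
    have e2: "exp (- y) \<le> 1" using y0 by simp
    have e3: "exp (- y) > 0" by simp
    show ?thesis
    proof (cases "v \<ge> 0")
      case True
      have "u * exp y \<ge> u * 1" using u e1 by (intro mult_left_mono) auto
      then have a: "u * exp y \<ge> u" by simp
      have b: "v * exp (- y) \<ge> 0" using True e3 by simp
      have "2 * B x = u * exp y + v * exp (- y)" using Bx by simp
      then show ?thesis using u a b by linarith
    next
      case False
      have "u * exp y \<ge> u * 1" using u e1 by (intro mult_left_mono) auto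
      moreover have "v * exp (- y) \<ge> v * 1" using False e2 by (intro mult_left_mono_neg) auto
      ultimately have "B x \<ge> (u + v) / 2" using Bx by simp
      moreover have "(u + v) / 2 = B b" by (simp add: u_def v_def)
      ultimately show ?thesis using Bb by simp
    qed
  qed
qed

lemma A_ge: "0 \<le> x \<Longrightarrow> A x \<ge> x/8"
proof -
  assume x: "0 \<le> x"
  have "(\<lambda>z. A z - z/8) 0 \<le> (\<lambda>z. A z - z/8) x"
  proof (rule incr_except[where r=r and a=0 and b=x and f="\<lambda>z. A z - z/8" and f'="\<lambda>z. B z - 1/8"])
    show "0 \<le> x" using x by simp
    show "continuous_on {0..x} (\<lambda>z. A z - z/8)"
      using A_cont by (auto intro!: continuous_intros intro: continuous_on_subset)
    fix z assume z: "0 < z" "z < x" "z \<noteq> r"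
    have "((\<lambda>z. A z - z/8) has_real_derivative B z - 1/8) (at z)"
      by (rule derivative_eq_intros AB(3) refl | simp)+
    then show "((\<lambda>z. A z - z/8) has_real_derivative B z - 1/8) (at z) \<and> 0 \<le> B z - 1/8"
      using B_ge[of z] z by auto
  qed
  then show ?thesis using AB(1) by simp
qed

lemma A_pos: "0 < x \<Longrightarrow> A x > 0" using A_ge[of x] by simp

lemma A_mono: "0 \<le> x \<Longrightarrow> x \<le> y \<Longrightarrow> A x \<le> A y"
proof -
  assume xy: "0 \<le> x" "x \<le> y"
  have "(\<lambda>z. A z) x \<le> (\<lambda>z. A z) y"
  proof (rule incr_except[where r=r and a=x and b=y and f="\<lambda>z. A z" and f'="\<lambda>z. B z"])
    show "x \<le> y" using xy by simp
    show "continuous_on {x..y} (\<lambda>z. A z)" using A_cont by (auto intro: continuous_on_subset)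
    fix z assume z: "x < z" "z < y" "z \<noteq> r"
    then show "((\<lambda>z. A z) has_real_derivative B z) (at z) \<and> 0 \<le> B z"
      using AB(3)[of z] B_ge[of z] xy by auto
  qed
  then show ?thesis by simp
qed

lemma A_strict: "0 \<le> x \<Longrightarrow> x < y \<Longrightarrow> A x < A y"
proof -
  assume xy: "0 \<le> x" "x < y"
  have "(\<lambda>z. A z - z/8) x \<le> (\<lambda>z. A z - z/8) y"
  proof (rule incr_except[where r=r and a=x and b=y and f="\<lambda>z. A z - z/8" and f'="\<lambda>z. B z - 1/8"])
    show "x \<le> y" using xy by simp
    show "continuous_on {x..y} (\<lambda>z. A z - z/8)"
      using A_cont by (auto intro!: continuous_intros intro: continuous_on_subset)
    fix z assume z: "x < z" "z < y" "z \<noteq> r"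
    have "((\<lambda>z. A z - z/8) has_real_derivative B z - 1/8) (at z)"
      by (rule derivative_eq_intros AB(3) refl | simp)+
    then show "((\<lambda>z. A z - z/8) has_real_derivative B z - 1/8) (at z) \<and> 0 \<le> B z - 1/8"
      using B_ge[of z] z xy by auto
  qed
  then show ?thesis using xy by simp
qed

lemma first_small: "0 \<le> x \<Longrightarrow> x \<le> b \<Longrightarrow> A x \<le> 2 \<and> B x \<le> 2"
  using first_part[of x] by auto

lemma right_facts:
  assumes x: "b \<le> x"
  shows "B x ^ 2 - A x ^ 2 \<ge> -16" "B x - A x \<le> 4"
proof -
  define u where "u = A b + B b"
  define v where "v = B b - A b"
  have fb: "\<bar>A b\<bar> \<le> 2" "\<bar>B b\<bar> \<le> 2" using first_part[of b] eps0 rpos by auto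
  have ub: "\<bar>u\<bar> \<le> 4" "\<bar>v\<bar> \<le> 4" using fb by (auto simp: u_def v_def)
  have r1: "A x + B x = u * exp (x - b)" "B x - A x = v * exp (- (x - b))"
    using right_part[OF x] by (auto simp: u_def v_def)
  have "B x ^ 2 - A x ^ 2 = (B x - A x) * (A x + B x)" by (simp add: power2_eq_square algebra_simps)
  also have "\<dots> = u * v * (exp (- (x - b)) * exp (x - b))" unfolding r1 by (simp add: algebra_simps)
  also have "\<dots> = u * v"
  proof -
    have "exp (- (x - b)) * exp (x - b) = 1" by (subst exp_add[symmetric]) simp
    then show ?thesis by simp
  qed
  finally have "B x ^ 2 - A x ^ 2 = u * v" .
  moreover have "\<bar>u * v\<bar> \<le> 4 * 4" unfolding abs_mult using ub by (intro mult_mono) auto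
  ultimately show "B x ^ 2 - A x ^ 2 \<ge> -16" by (simp add: abs_le_iff)
  have "v * exp (- (x - b)) \<le> \<bar>v\<bar> * 1"
  proof -
    have "v * exp (- (x - b)) \<le> \<bar>v\<bar> * exp (- (x - b))" by (intro mult_right_mono) auto
    also have "\<dots> \<le> \<bar>v\<bar> * 1" using x by (intro mult_left_mono) auto
    finally show ?thesis .
  qed
  then show "B x - A x \<le> 4" using r1 ub by simp
qed

end

lemma cons_zero: "- (2 * v * (q / p * (1 - v^2))) * p^2 + (1 - v^2) * (2 * p * (q * v)) = (0::real)"
  by (cases "p = 0") (simp_all add: field_simps power2_eq_square)

lemma cons_zero2: "(1 - v * v) * (p * (q * v) + (q * v) * p) + (0 - (v * (q / p * (1 - v^2)) + (q / p * (1 - v^2)) * v)) * (p * p) = (0::real)"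
  by (cases "p = 0") (simp_all add: field_simps power2_eq_square)

lemma p_deriv_alg: "p \<noteq> 0 \<Longrightarrow> q * v * v + (q / p * (1 - v^2)) * p = (q::real)"
  by (simp add: field_simps power2_eq_square)

lemma uniq_ineq:
  fixes a c X L M :: real
  assumes X: "\<bar>X\<bar> \<le> L * \<bar>a\<bar> + M * \<bar>c\<bar>" and L: "L \<ge> 0" and M: "M \<ge> 0"
  shows "\<bar>2*a*c + 2*c*X\<bar> \<le> (1 + L + 2*M) * (a^2 + c^2)"
proof -
  have ac: "2*\<bar>a\<bar>*\<bar>c\<bar> \<le> a^2 + c^2"
  proof -
    have "0 \<le> (\<bar>a\<bar> - \<bar>c\<bar>)^2" by simp
    then show ?thesis by (simp add: power2_eq_square algebra_simps)
  qed
  have "\<bar>2*a*c + 2*c*X\<bar> \<le> 2*\<bar>a\<bar>*\<bar>c\<bar> + 2*\<bar>c\<bar>*\<bar>X\<bar>" by (simp add: abs_mult abs_triangle_ineq[THEN order_trans])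
  also have "2*\<bar>c\<bar>*\<bar>X\<bar> \<le> 2*\<bar>c\<bar>*(L * \<bar>a\<bar> + M * \<bar>c\<bar>)" using X by (intro mult_left_mono) auto
  also have "2*\<bar>c\<bar>*(L * \<bar>a\<bar> + M * \<bar>c\<bar>) = L * (2*\<bar>a\<bar>*\<bar>c\<bar>) + 2*M*c^2"
    by (simp add: algebra_simps power2_eq_square)
  also have "L * (2*\<bar>a\<bar>*\<bar>c\<bar>) \<le> L * (a^2 + c^2)" using ac L by (intro mult_left_mono)
  finally have "\<bar>2*a*c + 2*c*X\<bar> \<le> (a^2 + c^2) + L * (a^2 + c^2) + 2*M*c^2" using ac by linarith
  also have "2*M*c^2 \<le> 2*M*(a^2+c^2)" using M by (intro mult_left_mono) auto
  finally show ?thesis by (simp add: algebra_simps)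
qed

lemma X_ineq:
  fixes g1 g2 v1 v2 L G :: real
  assumes "\<bar>g1 - g2\<bar> \<le> L * \<bar>p1 - p2\<bar>" "0 \<le> g2" "g2 \<le> G" "v1^2 < 1" "v2^2 < 1"
  shows "\<bar>g1 * (1 - v1^2) - g2 * (1 - v2^2)\<bar> \<le> L * \<bar>p1 - p2\<bar> + (2*G) * \<bar>v1 - v2\<bar>"
proof -
  have e: "g1 * (1 - v1^2) - g2 * (1 - v2^2) = (g1 - g2) * (1 - v1^2) + g2 * ((v2 - v1) * (v2 + v1))"
    by (simp add: algebra_simps power2_eq_square)
  have v1: "\<bar>v1\<bar> \<le> 1" "\<bar>v2\<bar> \<le> 1" using assms(4,5) by (auto simp: abs_square_less_1 less_imp_le)
  have t1: "\<bar>(g1 - g2) * (1 - v1^2)\<bar> \<le> L * \<bar>p1 - p2\<bar>"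
  proof -
    have "\<bar>(g1 - g2) * (1 - v1^2)\<bar> = \<bar>g1 - g2\<bar> * \<bar>1 - v1^2\<bar>" by (simp add: abs_mult)
    also have "\<dots> \<le> \<bar>g1 - g2\<bar> * 1" using assms(4) by (intro mult_left_mono) auto
    finally show ?thesis using assms(1) by simp
  qed
  have t2: "\<bar>g2 * ((v2 - v1) * (v2 + v1))\<bar> \<le> (2*G) * \<bar>v1 - v2\<bar>"
  proof -
    have "\<bar>g2 * ((v2 - v1) * (v2 + v1))\<bar> = g2 * (\<bar>v1 - v2\<bar> * \<bar>v2 + v1\<bar>)" using assms(2) by (simp add: abs_mult abs_minus_commute)
    also have "\<dots> \<le> G * (\<bar>v1 - v2\<bar> * 2)"
      using assms(2,3) v1 by (intro mult_mono) (auto intro!: mult_left_mono)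
    finally show ?thesis by simp
  qed
  show ?thesis unfolding e using t1 t2 abs_triangle_ineq[of "(g1 - g2) * (1 - v1^2)" "g2 * ((v2 - v1) * (v2 + v1))"] by linarith
qed

context wsetup begin

definition "g x = B x / A x"
definition "G0 s = 1 + 4 / A s"
definition "Lg s = 1 + (G0 s)^2"

lemma g_bounds:
  assumes s: "0 < s" and x: "s \<le> x"
  shows "0 \<le> g x" "g x \<le> G0 s"
proof -
  have As: "A s > 0" using A_pos[OF s] .
  have Ax: "A s \<le> A x" using A_mono[of s x] s x by simp
  have Bx: "B x \<ge> 1/8" using B_ge[of x] s x by simp
  show "0 \<le> g x" using As Ax Bx by (simp add: g_def)
  show "g x \<le> G0 s"
  proof (cases "x \<le> b")
    case True
    have "B x \<le> 2" using first_small[of x] True s x by simp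
    then have "B x / A x \<le> 2 / A s" using As Ax by (intro frac_le) auto
    also have "2 / A s \<le> 1 + 4 / A s" using As by (simp add: field_simps)
    finally show ?thesis by (simp add: g_def G0_def)
  next
    case False
    have "B x - A x \<le> 4" using right_facts(2)[of x] False by simp
    then have "B x / A x \<le> (A x + 4) / A x" using As Ax by (intro divide_right_mono) auto
    also have "(A x + 4) / A x = 1 + 4 / A x" using As Ax by (simp add: field_simps)
    also have "4 / A x \<le> 4 / A s" using As Ax by (intro divide_left_mono) auto
    finally show ?thesis by (simp add: g_def G0_def)
  qed
qed

lemma g_deriv:
  assumes x: "0 < x" "\<epsilon> = 0 \<longrightarrow> x \<noteq> r"
  shows "(g has_real_derivative - K x - (g x)^2) (at x)"
proof -
  have Ax: "A x \<noteq> 0" using A_pos[OF x(1)] by simp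
  have "((\<lambda>x. B x / A x) has_real_derivative ((- K x * A x) * A x - B x * B x) / (A x * A x)) (at x)"
    by (rule DERIV_divide[OF AB(5)[OF x(2)] AB(3) Ax])
  moreover have "((- K x * A x) * A x - B x * B x) / (A x * A x) = - K x - (g x)^2"
    using Ax by (simp add: g_def field_simps power2_eq_square)
  ultimately show ?thesis by (simp add: g_def[abs_def])
qed

lemma g_cont: "0 < s \<Longrightarrow> continuous_on {s..} g"
proof -
  assume s: "0 < s"
  have nz: "\<forall>x\<in>{s..}. A x \<noteq> 0"
  proof
    fix x assume "x \<in> {s..}"
    then have "0 < x" using s by simp
    then show "A x \<noteq> 0" using A_pos[of x] by simp
  qed
  show ?thesis
    unfolding g_def[abs_def]
    by (rule continuous_on_divide[OF continuous_on_subset[OF AB(4)] continuous_on_subset[OF A_cont] nz]) auto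
qed

lemma g_lip:
  assumes s: "0 < s" and x: "s \<le> x" and y: "s \<le> y"
  shows "\<bar>g x - g y\<bar> \<le> Lg s * \<bar>x - y\<bar>"
proof (rule lip_bound[where lo=s and r=r and f=g and f'="\<lambda>x. - K x - (g x)^2", OF g_cont[OF s] _ _ x y])
  fix z assume z: "s < z" "z \<noteq> r"
  then show "(g has_real_derivative - K z - (g z)^2) (at z)" using s by (intro g_deriv) auto
  have gz: "0 \<le> g z" "g z \<le> G0 s" using g_bounds[OF s, of z] z by auto
  have "(g z)^2 \<le> (G0 s)^2" using gz by (intro power_mono) auto
  moreover have "\<bar>K z\<bar> \<le> 1" by (rule K_bound)
  moreover have "(g z)^2 \<ge> 0" by simp
  ultimately show "\<bar>- K z - (g z)^2\<bar> \<le> Lg s" unfolding Lg_def abs_le_iff by linarith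
qed

lemma rho_props:
  fixes \<rho> v :: "real \<Rightarrow> real"
  assumes s: "0 < s" and i: "\<rho> 0 = s" "v 0 = 0"
    and d1: "\<And>t. (\<rho> has_real_derivative v t) (at t)"
    and d2: "\<And>t. (v has_real_derivative B (\<rho> t) / A (\<rho> t) * (1 - (v t)^2)) (at t)"
  shows "\<rho> t \<ge> s" "(v t)^2 < 1" "0 \<le> t \<Longrightarrow> A (\<rho> t) \<ge> t/8"
proof -
  have dAr: "((\<lambda>t. A (\<rho> t)) has_real_derivative B (\<rho> t) * v t) (at t)" for t
    by (rule DERIV_chain2[OF AB(3) d1])
  have c\<rho>: "continuous_on UNIV \<rho>" using d1 by (intro continuous_at_imp_continuous_on ballI DERIV_isCont)
  define C where "C t = (1 - v t * v t) * (A (\<rho> t) * A (\<rho> t))" for t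
  have dC: "(C has_real_derivative 0) (at t)" for t
  proof -
    define vd where "vd = B (\<rho> t) / A (\<rho> t) * (1 - (v t)^2)"
    have h1: "((\<lambda>t. v t * v t) has_real_derivative v t * vd + vd * v t) (at t)"
      unfolding vd_def by (rule DERIV_mult'[OF d2 d2])
    have h2: "((\<lambda>t. 1 - v t * v t) has_real_derivative 0 - (v t * vd + vd * v t)) (at t)"
      by (rule DERIV_diff[OF DERIV_const h1])
    have h3: "((\<lambda>t. A (\<rho> t) * A (\<rho> t)) has_real_derivative
        A (\<rho> t) * (B (\<rho> t) * v t) + (B (\<rho> t) * v t) * A (\<rho> t)) (at t)"
      by (rule DERIV_mult'[OF dAr dAr])
    have D: "(C has_real_derivative (1 - v t * v t) * (A (\<rho> t) * (B (\<rho> t) * v t) + (B (\<rho> t) * v t) * A (\<rho> t))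
        + (0 - (v t * vd + vd * v t)) * (A (\<rho> t) * A (\<rho> t))) (at t)"
      unfolding C_def[abs_def] by (rule DERIV_mult'[OF h2 h3])
    have Z: "(1 - v t * v t) * (A (\<rho> t) * (B (\<rho> t) * v t) + (B (\<rho> t) * v t) * A (\<rho> t))
        + (0 - (v t * vd + vd * v t)) * (A (\<rho> t) * A (\<rho> t)) = 0"
      unfolding vd_def by (rule cons_zero2)
    show ?thesis using D unfolding Z .
  qed
  have Cc: "C t = (A s)^2" for t
  proof -
    have "\<forall>x. (C has_real_derivative 0) (at x)" using dC by blast
    then have "C t = C 0" by (rule DERIV_isconst_all)
    then show ?thesis using i by (simp add: C_def power2_eq_square)
  qed
  have As: "A s > 0" using A_pos[OF s] .
  have Ane: "A (\<rho> t) \<noteq> 0" for t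
  proof
    assume "A (\<rho> t) = 0"
    then have "C t = 0" by (simp add: C_def)
    then show False using Cc[of t] As by simp
  qed
  have rpos': "\<rho> t > 0" for t
  proof (rule ccontr)
    assume "\<not> \<rho> t > 0"
    then have le: "\<rho> t \<le> 0" by simp
    obtain x where "\<rho> x = 0"
    proof (cases "0 \<le> t")
      case True
      obtain x where "0 \<le> x" "x \<le> t" "\<rho> x = 0"
        using IVT2'[of \<rho> t 0 0] le i s True c\<rho> by (auto intro: continuous_on_subset)
      then show ?thesis using that by blast
    next
      case False
      obtain x where "t \<le> x" "x \<le> 0" "\<rho> x = 0"
        using IVT'[of \<rho> t 0 0] le i s False c\<rho> by (auto intro: continuous_on_subset)
      then show ?thesis using that by blast
    qed
    then show False using Ane[of x] AB(1) by simp
  qed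
  have Apos': "A (\<rho> t) > 0" for t using A_pos[OF rpos'[of t]] .
  have v1: "(v t)^2 < 1" for t
  proof -
    have "(1 - (v t)^2) * (A (\<rho> t))^2 > 0" using Cc[of t] As by (simp add: C_def power2_eq_square)
    moreover have "(A (\<rho> t))^2 > 0" using Apos'[of t] by simp
    ultimately have "1 - (v t)^2 > 0" by (simp add: zero_less_mult_iff)
    then show ?thesis by simp
  qed
  then show "(v t)^2 < 1" .
  have Age: "A (\<rho> t) \<ge> A s" for t
  proof -
    have "(A s)^2 = (1 - (v t)^2) * (A (\<rho> t))^2" using Cc[of t] by (simp add: C_def power2_eq_square)
    also have "\<dots> \<le> 1 * (A (\<rho> t))^2" by (intro mult_right_mono) auto
    finally have "(A s)^2 \<le> (A (\<rho> t))^2" by simp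
    then show ?thesis by (rule power2_le_imp_le) (use Apos'[of t] in simp)
  qed
  show "\<rho> t \<ge> s"
  proof (rule ccontr)
    assume "\<not> \<rho> t \<ge> s"
    then have "A (\<rho> t) < A s" using A_strict[of "\<rho> t" s] rpos'[of t] by simp
    then show False using Age[of t] by simp
  qed
  assume t: "0 \<le> t"
  define P where "P t = A (\<rho> t) * v t" for t
  have dP: "(P has_real_derivative B (\<rho> t)) (at t)" for t
  proof -
    have "(P has_real_derivative B (\<rho> t) * v t * v t + (B (\<rho> t) / A (\<rho> t) * (1 - (v t)^2)) * A (\<rho> t)) (at t)"
      unfolding P_def[abs_def] by (rule DERIV_mult[OF dAr d2])
    then show ?thesis using p_deriv_alg[OF Ane[of t]] by simp
  qed
  have "(\<lambda>z. P z - z/8) 0 \<le> (\<lambda>z. P z - z/8) t"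
  proof (rule incr_except[where r=r and a=0 and b=t and f="\<lambda>z. P z - z/8" and f'="\<lambda>z. B (\<rho> z) - 1/8"])
    show "0 \<le> t" using t .
    have "continuous_on UNIV P" using dP by (intro continuous_at_imp_continuous_on ballI DERIV_isCont)
    then show "continuous_on {0..t} (\<lambda>z. P z - z/8)"
      by (auto intro!: continuous_intros intro: continuous_on_subset)
    fix z assume z: "0 < z" "z < t" "z \<noteq> r"
    have "((\<lambda>z. P z - z/8) has_real_derivative B (\<rho> z) - 1/8) (at z)"
      by (rule derivative_eq_intros dP refl | simp)+
    moreover have "B (\<rho> z) \<ge> 1/8" using B_ge[of "\<rho> z"] rpos'[of z] by simp
    ultimately show "((\<lambda>z. P z - z/8) has_real_derivative B (\<rho> z) - 1/8) (at z) \<and> 0 \<le> B (\<rho> z) - 1/8"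
      by simp
  qed
  then have Pt: "P t \<ge> t/8" using i by (simp add: P_def)
  have "\<bar>v t\<bar> \<le> 1" using v1[of t] by (simp add: abs_square_less_1 less_imp_le)
  then have "A (\<rho> t) * v t \<le> A (\<rho> t) * 1" using Apos'[of t] by (intro mult_left_mono) auto
  then show "A (\<rho> t) \<ge> t/8" using Pt by (simp add: P_def)
qed

end

context wsetup begin

lemma Lg_ge: "0 < s \<Longrightarrow> Lg s \<ge> 1" by (simp add: Lg_def)
lemma G0_ge: "0 < s \<Longrightarrow> G0 s \<ge> 0" using A_pos[of s] by (simp add: G0_def)

lemma rho_unique:
  assumes s: "0 < s" and 1: "is_rho \<phi> s r \<epsilon> \<rho>1" and 2: "is_rho \<phi> s r \<epsilon> \<rho>2"
  shows "\<rho>1 = \<rho>2"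
proof
  fix t
  obtain v1 where v1: "\<rho>1 0 = s" "v1 0 = 0" "\<And>t. (\<rho>1 has_real_derivative v1 t) (at t)"
    "\<And>t. (v1 has_real_derivative B (\<rho>1 t) / A (\<rho>1 t) * (1 - (v1 t)^2)) (at t)"
    using 1 unfolding is_rho_def by blast
  obtain v2 where v2: "\<rho>2 0 = s" "v2 0 = 0" "\<And>t. (\<rho>2 has_real_derivative v2 t) (at t)"
    "\<And>t. (v2 has_real_derivative B (\<rho>2 t) / A (\<rho>2 t) * (1 - (v2 t)^2)) (at t)"
    using 2 unfolding is_rho_def by blast
  note p1 = rho_props[OF s v1(1,2) v1(3) v1(4)]
  note p2 = rho_props[OF s v2(1,2) v2(3) v2(4)]
  define E where "E t = (\<rho>1 t - \<rho>2 t) * (\<rho>1 t - \<rho>2 t) + (v1 t - v2 t) * (v1 t - v2 t)" for t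
  define X where "X t = B (\<rho>1 t) / A (\<rho>1 t) * (1 - (v1 t)^2) - B (\<rho>2 t) / A (\<rho>2 t) * (1 - (v2 t)^2)" for t
  define E' where "E' t = (\<rho>1 t - \<rho>2 t) * (v1 t - v2 t) + (v1 t - v2 t) * (\<rho>1 t - \<rho>2 t)
      + ((v1 t - v2 t) * X t + X t * (v1 t - v2 t))" for t
  have cE: "continuous_on UNIV E"
  proof -
    have "continuous_on UNIV \<rho>1" "continuous_on UNIV \<rho>2" "continuous_on UNIV v1" "continuous_on UNIV v2"
      using v1(3,4) v2(3,4) by (auto intro!: continuous_at_imp_continuous_on DERIV_isCont)
    then show ?thesis unfolding E_def[abs_def] by (intro continuous_intros)
  qed
  have "E t = 0"
  proof (rule gronwall_zero[where r=r and E=E and t=t and E'=E' and C="1 + Lg s + 2 * (2 * G0 s)"])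
    show "continuous_on UNIV E" by (rule cE)
    show "0 \<le> E x" for x by (simp add: E_def)
    show "E 0 = 0" using v1 v2 by (simp add: E_def)
    fix x
    have Dd: "((\<lambda>t. \<rho>1 t - \<rho>2 t) has_real_derivative v1 x - v2 x) (at x)" by (rule DERIV_diff[OF v1(3) v2(3)])
    have Vd: "((\<lambda>t. v1 t - v2 t) has_real_derivative X x) (at x)" unfolding X_def by (rule DERIV_diff[OF v1(4) v2(4)])
    show "(E has_real_derivative E' x) (at x)"
      unfolding E_def[abs_def] E'_def by (rule DERIV_add[OF DERIV_mult'[OF Dd Dd] DERIV_mult'[OF Vd Vd]])
    have gl: "\<bar>g (\<rho>1 x) - g (\<rho>2 x)\<bar> \<le> Lg s * \<bar>\<rho>1 x - \<rho>2 x\<bar>"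
      by (rule g_lip[OF s p1(1) p2(1)])
    have gb: "0 \<le> g (\<rho>2 x)" "g (\<rho>2 x) \<le> G0 s" using g_bounds[OF s p2(1)] by auto
    have Xb: "\<bar>X x\<bar> \<le> Lg s * \<bar>\<rho>1 x - \<rho>2 x\<bar> + (2 * G0 s) * \<bar>v1 x - v2 x\<bar>"
      unfolding X_def using X_ineq[OF gl gb p1(2) p2(2)] by (simp add: g_def)
    have "\<bar>2 * (\<rho>1 x - \<rho>2 x) * (v1 x - v2 x) + 2 * (v1 x - v2 x) * X x\<bar>
        \<le> (1 + Lg s + 2 * (2 * G0 s)) * ((\<rho>1 x - \<rho>2 x)^2 + (v1 x - v2 x)^2)"
      by (rule uniq_ineq[OF Xb]) (use Lg_ge[OF s] G0_ge[OF s] in auto)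
    moreover have "E' x = 2 * (\<rho>1 x - \<rho>2 x) * (v1 x - v2 x) + 2 * (v1 x - v2 x) * X x"
      by (simp add: E'_def algebra_simps)
    moreover have "E x = (\<rho>1 x - \<rho>2 x)^2 + (v1 x - v2 x)^2" by (simp add: E_def power2_eq_square)
    ultimately show "\<bar>E' x\<bar> \<le> (1 + Lg s + 2 * (2 * G0 s)) * E x" by simp
  qed
  then show "\<rho>1 t = \<rho>2 t" by (simp add: E_def)
qed

lemma rho_exists:
  assumes s: "0 < s"
  shows "\<exists>\<rho>. is_rho \<phi> s r \<epsilon> \<rho>"
proof -
  define G where "G x = g (max x s)" for x
  have cg: "continuous_on {s..} g" by (rule g_cont[OF s])
  have Gc: "continuous_on UNIV (\<lambda>t. G (Y t))" if "continuous_on UNIV Y" for Y :: "real \<Rightarrow> real"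
    unfolding G_def by (rule continuous_on_compose2[OF cg]) (use that in \<open>auto intro!: continuous_intros\<close>)
  have Glip: "\<bar>G y - G y'\<bar> \<le> Lg s * \<bar>y - y'\<bar>" for y y'
  proof -
    have "\<bar>G y - G y'\<bar> \<le> Lg s * \<bar>max y s - max y' s\<bar>" unfolding G_def by (rule g_lip[OF s]) auto
    also have "\<dots> \<le> Lg s * \<bar>y - y'\<bar>" using Lg_ge[OF s] by (intro mult_left_mono) (auto simp: max_def)
    finally show ?thesis .
  qed
  have Gnn: "G y \<ge> 0" for y using g_bounds(1)[OF s, of "max y s"] by (simp add: G_def)
  interpret o: ode2 "\<lambda>t y z. tanh z" "\<lambda>t y z. G y" "1 + Lg s"
  proof
    fix Y Z :: "real \<Rightarrow> real"
    assume cY: "continuous_on UNIV Y" and cZ: "continuous_on UNIV Z"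
    show "continuous_on UNIV (\<lambda>t. tanh (Z t))" using cZ by (intro continuous_intros) auto
    show "continuous_on UNIV (\<lambda>t. G (Y t))" by (rule Gc[OF cY])
  next
    fix t y z y' z' :: real
    have "\<bar>tanh z - tanh z'\<bar> \<le> 1 * \<bar>z - z'\<bar>" by (rule tanh_lip)
    also have "\<dots> \<le> (1 + Lg s) * (\<bar>y - y'\<bar> + \<bar>z - z'\<bar>)" using Lg_ge[OF s] by (intro mult_mono) auto
    finally show "\<bar>tanh z - tanh z'\<bar> \<le> (1 + Lg s) * (\<bar>y - y'\<bar> + \<bar>z - z'\<bar>)" .
    have "\<bar>G y - G y'\<bar> \<le> Lg s * \<bar>y - y'\<bar>" by (rule Glip)
    also have "\<dots> \<le> (1 + Lg s) * (\<bar>y - y'\<bar> + \<bar>z - z'\<bar>)" using Lg_ge[OF s] by (intro mult_mono) auto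
    finally show "\<bar>G y - G y'\<bar> \<le> (1 + Lg s) * (\<bar>y - y'\<bar> + \<bar>z - z'\<bar>)" .
  next
    show "0 < 1 + Lg s" using Lg_ge[OF s] by simp
  qed
  obtain \<rho> w where sol: "\<rho> 0 = s" "w 0 = 0"
    "\<And>t. (\<rho> has_real_derivative tanh (w t)) (at t)" "\<And>t. (w has_real_derivative G (\<rho> t)) (at t)"
    using o.ode_exists[of s 0] by blast
  have cw: "continuous_on UNIV w" using sol(4) by (intro continuous_at_imp_continuous_on ballI DERIV_isCont)
  have c\<rho>: "continuous_on UNIV \<rho>" using sol(3) by (intro continuous_at_imp_continuous_on ballI DERIV_isCont)
  have wpos: "w t \<ge> 0" if "0 \<le> t" for t
  proof -
    have "w 0 \<le> w t"
      by (rule incr_except[where r=r and a=0 and b=t and f=w and f'="\<lambda>u. G (\<rho> u)"])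
        (use that cw sol(4) Gnn in \<open>auto intro: continuous_on_subset\<close>)
    then show ?thesis using sol(2) by simp
  qed
  have wneg: "w t \<le> 0" if "t \<le> 0" for t
  proof -
    have "w t \<le> w 0"
      by (rule incr_except[where r=r and a=t and b=0 and f=w and f'="\<lambda>u. G (\<rho> u)"])
        (use that cw sol(4) Gnn in \<open>auto intro: continuous_on_subset\<close>)
    then show ?thesis using sol(2) by simp
  qed
  have rge: "\<rho> t \<ge> s" for t
  proof (cases "0 \<le> t")
    case True
    have "\<rho> 0 \<le> \<rho> t"
      by (rule incr_except[where r=r and a=0 and b=t and f=\<rho> and f'="\<lambda>u. tanh (w u)"])
        (use True c\<rho> sol(3) wpos in \<open>auto intro: continuous_on_subset\<close>)
    then show ?thesis using sol(1) by simp
  next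
    case False
    have "(\<lambda>u. - \<rho> u) t \<le> (\<lambda>u. - \<rho> u) 0"
    proof (rule incr_except[where r=r and a=t and b=0 and f="\<lambda>u. - \<rho> u" and f'="\<lambda>u. - tanh (w u)"])
      show "t \<le> 0" using False by simp
      show "continuous_on {t..0} (\<lambda>u. - \<rho> u)" using c\<rho> by (auto intro!: continuous_intros intro: continuous_on_subset)
      fix u assume u: "t < u" "u < 0" "u \<noteq> r"
      show "((\<lambda>u. - \<rho> u) has_real_derivative - tanh (w u)) (at u) \<and> 0 \<le> - tanh (w u)"
        using DERIV_minus[OF sol(3)[of u]] wneg[of u] u by simp
    qed
    then show ?thesis using sol(1) by simp
  qed
  have "is_rho \<phi> s r \<epsilon> \<rho>"
    unfolding is_rho_def
  proof (intro exI[of _ "\<lambda>t. tanh (w t)"] conjI allI)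
    show "\<rho> 0 = s" by (rule sol(1))
    show "tanh (w 0) = 0" using sol(2) by simp
    fix t
    show "(\<rho> has_real_derivative tanh (w t)) (at t)" by (rule sol(3))
    have "((\<lambda>t. tanh (w t)) has_real_derivative (1 - tanh (w t) ^ 2) * G (\<rho> t)) (at t)"
      by (rule has_field_derivative_tanh[OF _ sol(4)]) simp
    moreover have "G (\<rho> t) = B (\<rho> t) / A (\<rho> t)" using rge[of t] by (simp add: G_def g_def max_def)
    ultimately show "((\<lambda>t. tanh (w t)) has_real_derivative B (\<rho> t) / A (\<rho> t) * (1 - (tanh (w t))^2)) (at t)"
      by (simp add: mult.commute)
  qed
  then show ?thesis by blast
qed

lemma rho_is: "0 < s \<Longrightarrow> is_rho \<phi> s r \<epsilon> (rho \<phi> s r \<epsilon>)"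
proof -
  assume s: "0 < s"
  have "is_rho \<phi> s r \<epsilon> (THE \<rho>. is_rho \<phi> s r \<epsilon> \<rho>)"
    using rho_exists[OF s] rho_unique[OF s] by (metis theI)
  then show ?thesis using s by (simp add: rho_def)
qed

lemma b_lt: "b < 2"
proof -
  have "pi < 4" by (rule pi_less_4)
  then show ?thesis using rlt eps1 by simp
qed

lemma main_local:
  assumes s: "0 \<le> s" and t: "40 \<le> t"
  shows "Kpar \<phi> r \<epsilon> (rho \<phi> s r \<epsilon> t) < 0 \<and> Kmu \<phi> s r \<epsilon> t < 0"
proof (cases "s = 0")
  case True
  have rr: "rho \<phi> s r \<epsilon> = (\<lambda>t. t)" using True by (simp add: rho_def)
  have d: "deriv (\<lambda>t. t) t = 1" by (rule DERIV_imp_deriv[OF DERIV_ident])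
  have "b < t" using b_lt t by simp
  then have Kt: "K t = -1" by (rule K_neg)
  show ?thesis unfolding Kmu_def Let_def rr d using Kt by simp
next
  case False
  then have s0: "0 < s" using s by simp
  obtain v where v: "rho \<phi> s r \<epsilon> 0 = s" "v 0 = 0" "\<And>t. (rho \<phi> s r \<epsilon> has_real_derivative v t) (at t)"
    "\<And>t. (v has_real_derivative B (rho \<phi> s r \<epsilon> t) / A (rho \<phi> s r \<epsilon> t) * (1 - (v t)^2)) (at t)"
    using rho_is[OF s0] unfolding is_rho_def by blast
  note p = rho_props[OF s0 v(1,2) v(3) v(4)]
  define x where "x = rho \<phi> s r \<epsilon> t"
  have Ax: "A x \<ge> 5" using p(3)[of t] t by (simp add: x_def)
  have x0: "x \<ge> s" using p(1)[of t] by (simp add: x_def)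
  have xb: "b < x"
  proof (rule ccontr)
    assume "\<not> b < x"
    then have "A x \<le> 2" using first_small[of x] x0 s0 by simp
    then show False using Ax by simp
  qed
  have Kx: "K x = -1" by (rule K_neg[OF xb])
  have d: "deriv (rho \<phi> s r \<epsilon>) t = v t" by (rule DERIV_imp_deriv[OF v(3)])
  have "B x ^ 2 - A x ^ 2 \<ge> -16" using right_facts(1)[of x] xb by simp
  moreover have "A x ^ 2 \<ge> 25" using Ax power_mono[of 5 "A x" 2] by simp
  ultimately have "1 - B x ^ 2 < 0" by simp
  moreover have "A x ^ 2 > 0" using Ax by simp
  ultimately have Kp: "Kperp \<phi> r \<epsilon> x < 0" by (simp add: Kperp_def divide_neg_pos)
  have vt: "1 - (v t)^2 > 0" using p(2)[of t] by simp
  have "(1 - (v t)^2) * Kperp \<phi> r \<epsilon> x < 0" using vt Kp by (simp add: mult_pos_neg)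
  moreover have "(v t)^2 * K x = (-1) * (v t)^2" using Kx by simp
  ultimately have "(v t)^2 * K x + (1 - (v t)^2) * Kperp \<phi> r \<epsilon> x < 0"
    using zero_le_power2[of "v t"] by linarith
  then show ?thesis unfolding Kmu_def Let_def d using Kx by (simp add: x_def)
qed

end

theorem lemma3p15:
  fixes \<phi> :: "real \<Rightarrow> real"
  assumes "cutoff \<phi>"
  shows "\<exists>\<eta>0>0. \<forall>\<eta>. 0 < \<eta> \<and> \<eta> < \<eta>0 \<longrightarrow>
           (\<exists>\<epsilon>1>0. \<forall>\<epsilon>0. 0 < \<epsilon>0 \<and> \<epsilon>0 < \<epsilon>1 \<longrightarrow>
              (\<exists>T>0. \<forall>t s r \<epsilon>. T \<le> t \<and> 0 \<le> s \<and> r \<in> {pi/4 - \<eta> .. pi/4 + \<eta>}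
                   \<and> 0 \<le> \<epsilon> \<and> \<epsilon> \<le> \<epsilon>0 \<longrightarrow>
                   Kpar \<phi> r \<epsilon> (rho \<phi> s r \<epsilon> t) < 0 \<and> Kmu \<phi> s r \<epsilon> t < 0))"
proof -
  have main: "Kpar \<phi> r \<epsilon> (rho \<phi> s r \<epsilon> t) < 0 \<and> Kmu \<phi> s r \<epsilon> t < 0"
    if H: "40 \<le> t" "0 \<le> s" "pi/4 - 1/5 < r" "r < pi/4 + 1/5" "0 \<le> \<epsilon>" "\<epsilon> < 1/8" for t s r \<epsilon>
  proof -
    have p3: "3 < pi" by (rule pi_gt3)
    interpret w: wsetup \<phi> r \<epsilon>
    proof
      show "cutoff \<phi>" by (rule assms)
      show "0 \<le> \<epsilon>" "\<epsilon> < 1/8" using H by auto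
      show "0 < r" using H p3 by linarith
      show "r < pi/3" using H p3 by linarith
    qed
    show ?thesis by (rule w.main_local) (use H in auto)
  qed
  show ?thesis
  proof (rule exI[of _ "1/5"], intro conjI allI impI)
    show "(0::real) < 1/5" by simp
    fix \<eta> :: real assume eta: "0 < \<eta> \<and> \<eta> < 1/5"
    show "\<exists>\<epsilon>1>0. \<forall>\<epsilon>0. 0 < \<epsilon>0 \<and> \<epsilon>0 < \<epsilon>1 \<longrightarrow>
              (\<exists>T>0. \<forall>t s r \<epsilon>. T \<le> t \<and> 0 \<le> s \<and> r \<in> {pi/4 - \<eta> .. pi/4 + \<eta>}
                   \<and> 0 \<le> \<epsilon> \<and> \<epsilon> \<le> \<epsilon>0 \<longrightarrow>
                   Kpar \<phi> r \<epsilon> (rho \<phi> s r \<epsilon> t) < 0 \<and> Kmu \<phi> s r \<epsilon> t < 0)"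
    proof (rule exI[of _ "1/8"], intro conjI allI impI)
      show "(0::real) < 1/8" by simp
      fix \<epsilon>0 :: real assume e0: "0 < \<epsilon>0 \<and> \<epsilon>0 < 1/8"
      show "\<exists>T>0. \<forall>t s r \<epsilon>. T \<le> t \<and> 0 \<le> s \<and> r \<in> {pi/4 - \<eta> .. pi/4 + \<eta>}
                   \<and> 0 \<le> \<epsilon> \<and> \<epsilon> \<le> \<epsilon>0 \<longrightarrow>
                   Kpar \<phi> r \<epsilon> (rho \<phi> s r \<epsilon> t) < 0 \<and> Kmu \<phi> s r \<epsilon> t < 0"
      proof (rule exI[of _ 40], intro conjI allI impI)
        show "(0::real) < 40" by simp
        fix t s r \<epsilon> :: real
        assume H: "40 \<le> t \<and> 0 \<le> s \<and> r \<in> {pi/4 - \<eta> .. pi/4 + \<eta>} \<and> 0 \<le> \<epsilon> \<and> \<epsilon> \<le> \<epsilon>0"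
        have m: "Kpar \<phi> r \<epsilon> (rho \<phi> s r \<epsilon> t) < 0 \<and> Kmu \<phi> s r \<epsilon> t < 0"
          by (rule main) (use H eta e0 in auto)
        show "Kpar \<phi> r \<epsilon> (rho \<phi> s r \<epsilon> t) < 0" using m by simp
        show "Kmu \<phi> s r \<epsilon> t < 0" using m by simp
      qed
    qed
  qed
qed

end
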